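(* Let $b,g$ be positive integers, $m=b+g$, and let $W$ be a binary-input channel. Let $L_1^{(1)},\dots,L_1^{(b)}$ and $R_1^{(1)},\dots,R_1^{(g)}$ be the level-1 channels obtained from $W$ (as defined in the context). Then for all $i=1,\dots,b$ and $j=1,\dots,g$, $$I(L_1^{(i)})\le I(W)\le I(R_1^{(j)}),$$ and both inequalities are strict unless $I(W)\in\{0,1\}$.
   Context: A binary-input channel $V\colon\{0,1\}\to\mathcal{Z}$ is a family of transition probabilities $V(z\mid x)$ on a discrete output alphabet; its symmetric capacity $I(V)$ is the mutual information (in bits) between a uniform input in $\{0,1\}$ and the output. Circuit associated with a pattern: a pattern is a word $\sigma=(\sigma_1,\dots,\sigma_m)\in\{L,R\}^m$ with $\sigma_1=L$ and $\sigma_m=R$. Choose distinct real numbers $p_1,\dots,p_{m-1}$ such that for $2\le k\le m-1$, $p_k<p_{k-1}$ if $\sigma_k=L$ and $p_k>p_{k-1}$ if $\sigma_k=R$. The map $u\mapsto x$ on $\{0,1\}^m$ is: start with $x=u$ and, for $k\in\{1,\dots,m-1\}$ taken in increasing order of $p_k$, replace $x_k$ by $x_k+x_{k+1}$ (mod 2). (The resulting map depends only on $\sigma$.) Given binary-input channels $V_1,\dots,V_m$, let $U_1,\dots,U_m$ be i.i.d. uniform on $\{0,1\}$, $X=x(U)$, and $Z_k$ the output of $V_k$ with input $X_k$, independently across $k$. The $k$-th synthesized channel is the channel from $U_k$ to $(Z_1,\dots,Z_m,U_1,\dots,U_{k-1})$; line $k$ is said to be of type $\sigma_k$. Pattern used: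 if $g\le b$, $\sigma=L^{b-g}(LR)^g$ ($b-g$ letters $L$ followed by $g$ pairs $LR$); if $g>b$, $\sigma=(LR)^bR^{g-b}$. Level-1 channels: apply the circuit with $V_1=\dots=V_m=W$; $L_1^{(i)}$ is the synthesized channel at the $i$-th line (counting from line 1 downward) of type $L$, and $R_1^{(j)}$ is the synthesized channel at the $j$-th line of type $R$. *)

theory Defs
  imports "HOL-Probability.Probability_Mass_Function" "HOL-Analysis.Infinite_Sum"
begin

type_synonym 'z channel = "bool \<Rightarrow> 'z pmf"

text \<open>Symmetric capacity (mutual information in bits between a uniform input and the output),
  with the convention 0 log 0 = 0 (automatic, since 0 * t = 0).\<close>
definition sym_cap :: "'z channel \<Rightarrow> real" where
  "sym_cap V = infsum (\<lambda>z. \<Sum>x\<in>(UNIV::bool set).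
      (1/2) * pmf (V x) z *
      log 2 (pmf (V x) z / ((pmf (V True) z + pmf (V False) z) / 2))) UNIV"

datatype LR = L | R

text \<open>Pattern used: L^(b-g) (LR)^g if g \<le> b, and (LR)^b R^(g-b) otherwise.
  Position k (1-indexed) of the pattern is the list element at index k-1.\<close>
definition pattern :: "nat \<Rightarrow> nat \<Rightarrow> LR list" where
  "pattern b g = (if g \<le> b then replicate (b - g) L @ concat (replicate g [L, R])
                  else concat (replicate b [L, R]) @ replicate (g - b) R)"

definition valid_order :: "LR list \<Rightarrow> (nat \<Rightarrow> real) \<Rightarrow> bool" where
  "valid_order \<sigma> p \<longleftrightarrow> inj_on p {1..<length \<sigma>} \<and>
     (\<forall>k\<in>{2..<length \<sigma>}. (\<sigma> ! (k - 1) = L \<longrightarrow> p k < p (k - 1)) \<and>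
                          (\<sigma> ! (k - 1) = R \<longrightarrow> p k > p (k - 1)))"

definition circuit :: "(nat \<Rightarrow> real) \<Rightarrow> nat \<Rightarrow> bool list \<Rightarrow> bool list" where
  "circuit p m u = fold (\<lambda>k x. x[k - 1 := (x ! (k - 1) \<noteq> x ! k)]) (sort_key p [1..<m]) u"

fun chan_out :: "(nat \<Rightarrow> 'z channel) \<Rightarrow> nat \<Rightarrow> bool list \<Rightarrow> 'z list pmf" where
  "chan_out V k [] = return_pmf []"
| "chan_out V k (x # xs) =
     bind_pmf (V k x) (\<lambda>z. bind_pmf (chan_out V (Suc k) xs) (\<lambda>zs. return_pmf (z # zs)))"

text \<open>The k-th synthesized channel: from U_k to (Z_1..Z_m, U_1..U_(k-1)), where U is
  uniform on {0,1}^m (so, given U_k = b, the other U_l are i.i.d. uniform).\<close>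
definition synth :: "(nat \<Rightarrow> 'z channel) \<Rightarrow> nat \<Rightarrow> (nat \<Rightarrow> real) \<Rightarrow> nat
                      \<Rightarrow> ('z list \<times> bool list) channel" where
  "synth V m p k b =
     bind_pmf (pmf_of_set {us :: bool list. length us = m \<and> us ! (k - 1) = b})
       (\<lambda>u. map_pmf (\<lambda>zs. (zs, take (k - 1) u)) (chan_out V 1 (circuit p m u)))"

definition nth_line :: "LR list \<Rightarrow> LR \<Rightarrow> nat \<Rightarrow> nat" where
  "nth_line \<sigma> t i = filter (\<lambda>k. \<sigma> ! (k - 1) = t) [1..<Suc (length \<sigma>)] ! (i - 1)"

definition L1 :: "'z channel \<Rightarrow> nat \<Rightarrow> nat \<Rightarrow> (nat \<Rightarrow> real) \<Rightarrow> nat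
                   \<Rightarrow> ('z list \<times> bool list) channel" where
  "L1 W b g p i = synth (\<lambda>_. W) (b + g) p (nth_line (pattern b g) L i)"

definition R1 :: "'z channel \<Rightarrow> nat \<Rightarrow> nat \<Rightarrow> (nat \<Rightarrow> real) \<Rightarrow> nat
                   \<Rightarrow> ('z list \<times> bool list) channel" where
  "R1 W b g p j = synth (\<lambda>_. W) (b + g) p (nth_line (pattern b g) R j)"

end

theory Submission
  imports Defs
begin

lemma ln_lt_minus_one: assumes "0 < (t::real)" "t \<noteq> 1" shows "ln t < t - 1"
proof -
  have s: "0 < sqrt t" "sqrt t \<noteq> 1" using assms by auto
  have "ln t = 2 * ln (sqrt t)" using assms by (simp add: ln_sqrt)
  also have "\<dots> \<le> 2 * (sqrt t - 1)" using ln_le_minus_one[OF s(1)] by simp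
  also have "\<dots> < t - 1"
  proof -
    have "(sqrt t - 1)^2 > 0" using s by simp
    then show ?thesis using assms by (simp add: power2_eq_square algebra_simps)
  qed
  finally show ?thesis .
qed

lemma ln_ge_inv: assumes "0 < (t::real)" shows "1 - 1/t \<le> ln t"
proof -
  have "ln (1/t) \<le> 1/t - 1" using assms by (intro ln_le_minus_one) simp
  moreover have "ln (1/t) = - ln t" using assms by (simp add: ln_div)
  ultimately show ?thesis by simp
qed

lemma ln_gt_inv: assumes "0 < (t::real)" "t \<noteq> 1" shows "1 - 1/t < ln t"
proof -
  have "ln (1/t) < 1/t - 1" using assms by (intro ln_lt_minus_one) auto
  moreover have "ln (1/t) = - ln t" using assms by (simp add: ln_div)
  ultimately show ?thesis by simp
qed

definition phi :: "real \<Rightarrow> real \<Rightarrow> real" where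
  "phi a b = (1/2)*a*log 2 (a/((a+b)/2)) + (1/2)*b*log 2 (b/((a+b)/2))"

lemma sym_cap_alt:
  "sym_cap V = infsum (\<lambda>z. phi (pmf (V True) z) (pmf (V False) z)) UNIV"
  unfolding sym_cap_def phi_def by (simp add: UNIV_bool add_ac)

lemma key_part:
  fixes a b A B :: real
  assumes "0 \<le> a" "0 \<le> b" "0 \<le> A" "0 \<le> B" "a > 0 \<Longrightarrow> A > 0"
  shows "a * ln (a/((a+b)/2)) - a * ln (A/((A+B)/2)) \<ge> a - (a+b)*A/(A+B)"
    and "a > 0 \<Longrightarrow> a*B \<noteq> b*A \<Longrightarrow> a * ln (a/((a+b)/2)) - a * ln (A/((A+B)/2)) > a - (a+b)*A/(A+B)"
proof -
  have main: "a * ln (a/((a+b)/2)) - a * ln (A/((A+B)/2)) = a * ln (a*(A+B)/((a+b)*A))"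
    and tpos: "a*(A+B)/((a+b)*A) > 0"
    and rhs: "a * (1 - 1/(a*(A+B)/((a+b)*A))) = a - (a+b)*A/(A+B)"
    if "a > 0" 
  proof -
    have "A > 0" using assms that by auto
    then have p: "a+b > 0" "A+B > 0" using assms that by auto
    have "ln (a/((a+b)/2)) - ln (A/((A+B)/2)) = ln ((a/((a+b)/2)) / (A/((A+B)/2)))"
      using p \<open>A>0\<close> that by (simp add: ln_div ln_mult)
    also have "(a/((a+b)/2)) / (A/((A+B)/2)) = a*(A+B)/((a+b)*A)" using p \<open>A>0\<close> that by (simp add: divide_simps)
    finally show "a * ln (a/((a+b)/2)) - a * ln (A/((A+B)/2)) = a * ln (a*(A+B)/((a+b)*A))"
      by (simp add: right_diff_distrib[symmetric])
    show "a*(A+B)/((a+b)*A) > 0" using p \<open>A>0\<close> that by simp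
    have "1/(a*(A+B)/((a+b)*A)) = (a+b)*A/(a*(A+B))" by simp
    then have "a * (1 - 1/(a*(A+B)/((a+b)*A))) = a - a*((a+b)*A/(a*(A+B)))" by (simp add: right_diff_distrib)
    also have "a*((a+b)*A/(a*(A+B))) = (a+b)*A/(A+B)" using that by simp
    finally show "a * (1 - 1/(a*(A+B)/((a+b)*A))) = a - (a+b)*A/(A+B)" .
  qed
  show "a * ln (a/((a+b)/2)) - a * ln (A/((A+B)/2)) \<ge> a - (a+b)*A/(A+B)"
  proof (cases "a > 0")
    case True
    have "ln (a*(A+B)/((a+b)*A)) \<ge> 1 - 1/(a*(A+B)/((a+b)*A))"
      using ln_ge_inv[OF tpos[OF True]] .
    then have "a * ln (a*(A+B)/((a+b)*A)) \<ge> a * (1 - 1/(a*(A+B)/((a+b)*A)))"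
      using True by (intro mult_left_mono) auto
    then show ?thesis using main[OF True] rhs[OF True] by simp
  next
    case False
    then have "a = 0" using assms by simp
    then show ?thesis using assms by (simp add: divide_nonneg_nonneg)
  qed
  assume a0: "a > 0" and ne: "a*B \<noteq> b*A"
  have "A > 0" using assms a0 by auto
  have t1: "a*(A+B)/((a+b)*A) \<noteq> 1"
  proof
    assume "a*(A+B)/((a+b)*A) = 1"
    then have "a*(A+B) = (a+b)*A" using a0 \<open>A>0\<close> assms by (simp add: field_simps split: if_splits)
    then show False using ne by (simp add: algebra_simps)
  qed
  have "ln (a*(A+B)/((a+b)*A)) > 1 - 1/(a*(A+B)/((a+b)*A))"
    using ln_gt_inv[OF tpos[OF a0] t1] .
  then have "a * ln (a*(A+B)/((a+b)*A)) > a * (1 - 1/(a*(A+B)/((a+b)*A)))"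
    using a0 by (intro mult_strict_left_mono) auto
  then show "a * ln (a/((a+b)/2)) - a * ln (A/((A+B)/2)) > a - (a+b)*A/(A+B)"
    using main[OF a0] rhs[OF a0] by simp
qed


lemma phi_lin_aux:
  fixes a b A B :: real
  assumes "0 \<le> a" "0 \<le> b" "0 \<le> A" "0 \<le> B" "a > 0 \<Longrightarrow> A > 0" "b > 0 \<Longrightarrow> B > 0"
  shows "phi a b - (1/2)*(a*log 2 (A/((A+B)/2)) + b*log 2 (B/((A+B)/2))) =
    ((a * ln (a/((a+b)/2)) - a * ln (A/((A+B)/2))) + (b * ln (b/((b+a)/2)) - b * ln (B/((B+A)/2)))) / (2 * ln 2)"
    and "(a - (a+b)*A/(A+B)) + (b - (b+a)*B/(B+A)) = 0"
proof -
  show "phi a b - (1/2)*(a*log 2 (A/((A+B)/2)) + b*log 2 (B/((A+B)/2))) =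
    ((a * ln (a/((a+b)/2)) - a * ln (A/((A+B)/2))) + (b * ln (b/((b+a)/2)) - b * ln (B/((B+A)/2)))) / (2 * ln 2)"
    unfolding phi_def log_def by (simp add: add_ac field_simps)
  show "(a - (a+b)*A/(A+B)) + (b - (b+a)*B/(B+A)) = 0"
  proof (cases "A + B = 0")
    case True
    then have "A = 0" "B = 0" using assms by auto
    then have "a = 0" "b = 0" using assms by force+
    then show ?thesis by simp
  next
    case False
    have "(a+b)*A/(A+B) + (b+a)*B/(B+A) = ((a+b)*A + (a+b)*B)/(A+B)"
      by (simp add: add_ac add_divide_distrib)
    also have "\<dots> = (a+b)*(A+B)/(A+B)" by (simp add: distrib_left)
    also have "\<dots> = a+b" using False by simp
    finally show ?thesis by simp
  qed
qed

lemma phi_lin: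
  fixes a b A B :: real
  assumes "0 \<le> a" "0 \<le> b" "0 \<le> A" "0 \<le> B" "a > 0 \<Longrightarrow> A > 0" "b > 0 \<Longrightarrow> B > 0"
  shows "(1/2)*(a*log 2 (A/((A+B)/2)) + b*log 2 (B/((A+B)/2))) \<le> phi a b"
proof -
  have ka: "a * ln (a/((a+b)/2)) - a * ln (A/((A+B)/2)) \<ge> a - (a+b)*A/(A+B)"
    using key_part(1)[of a b A B] assms by auto
  have kb: "b * ln (b/((b+a)/2)) - b * ln (B/((B+A)/2)) \<ge> b - (b+a)*B/(B+A)"
    using key_part(1)[of b a B A] assms by auto
  have "0 \<le> ((a * ln (a/((a+b)/2)) - a * ln (A/((A+B)/2))) + (b * ln (b/((b+a)/2)) - b * ln (B/((B+A)/2)))) / (2 * ln 2)"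
    using ka kb phi_lin_aux(2)[OF assms] by (intro divide_nonneg_pos) auto
  then show ?thesis using phi_lin_aux(1)[OF assms] by linarith
qed

lemma phi_lin_strict:
  fixes a b A B :: real
  assumes "0 \<le> a" "0 \<le> b" "0 \<le> A" "0 \<le> B" "a > 0 \<Longrightarrow> A > 0" "b > 0 \<Longrightarrow> B > 0"
    and "a > 0 \<or> b > 0" "a*B \<noteq> b*A"
  shows "(1/2)*(a*log 2 (A/((A+B)/2)) + b*log 2 (B/((A+B)/2))) < phi a b"
proof -
  have ka: "a * ln (a/((a+b)/2)) - a * ln (A/((A+B)/2)) \<ge> a - (a+b)*A/(A+B)"
    using key_part(1)[of a b A B] assms by auto
  have kb: "b * ln (b/((b+a)/2)) - b * ln (B/((B+A)/2)) \<ge> b - (b+a)*B/(B+A)"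
    using key_part(1)[of b a B A] assms by auto
  have "a * ln (a/((a+b)/2)) - a * ln (A/((A+B)/2)) > a - (a+b)*A/(A+B) \<or>
        b * ln (b/((b+a)/2)) - b * ln (B/((B+A)/2)) > b - (b+a)*B/(B+A)"
  proof (cases "a > 0")
    case True
    then show ?thesis using key_part(2)[of a b A B] assms by auto
  next
    case False
    then have "b > 0" using assms by auto
    moreover have "b*A \<noteq> a*B" using assms by auto
    ultimately show ?thesis using key_part(2)[of b a B A] assms by auto
  qed
  then have "0 < ((a * ln (a/((a+b)/2)) - a * ln (A/((A+B)/2))) + (b * ln (b/((b+a)/2)) - b * ln (B/((B+A)/2)))) / (2 * ln 2)"
    using ka kb phi_lin_aux(2)[OF assms(1-6)] by (intro divide_pos_pos) auto
  then show ?thesis using phi_lin_aux(1)[OF assms(1-6)] by linarith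
qed

lemma phi_nonneg: "0 \<le> a \<Longrightarrow> 0 \<le> b \<Longrightarrow> 0 \<le> phi a b"
  using phi_lin[of a b 1 1] by simp

lemma phi_pos: assumes "0 \<le> a" "0 \<le> b" "a \<noteq> b" shows "0 < phi a b"
proof -
  have "0 < a \<or> 0 < b" using assms by linarith
  then show ?thesis using phi_lin_strict[of a b 1 1] assms by auto
qed

lemma phi_same: "phi a a = 0"
  by (cases "a = 0") (simp_all add: phi_def)

lemma phi_zero: "0 \<le> a \<Longrightarrow> phi a 0 = a/2" "0 \<le> a \<Longrightarrow> phi 0 a = a/2"
  by (cases "a = 0"; simp add: phi_def)+

lemma phi_sym: "phi a b = phi b a"
  by (simp add: phi_def add_ac)

lemma phi_le: assumes "0 \<le> a" "0 \<le> b" shows "phi a b \<le> (a+b)/2"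
proof -
  have "a * log 2 (a/((a+b)/2)) \<le> a" 
  proof (cases "a = 0")
    case False
    then have "a > 0" using assms by simp
    then have "a/((a+b)/2) \<le> 2" using assms by (simp add: field_simps)
    then have "log 2 (a/((a+b)/2)) \<le> log 2 2" using \<open>a>0\<close> assms by (intro log_mono) auto
    then show ?thesis using \<open>a > 0\<close> by (simp add: mult_le_cancel_left1)
  qed simp
  moreover have "b * log 2 (b/((a+b)/2)) \<le> b" 
  proof (cases "b = 0")
    case False
    then have "b > 0" using assms by simp
    then have "b/((a+b)/2) \<le> 2" using assms by (simp add: field_simps)
    then have "log 2 (b/((a+b)/2)) \<le> log 2 2" using \<open>b>0\<close> assms by (intro log_mono) auto
    then show ?thesis using \<open>b > 0\<close> by (simp add: mult_le_cancel_left1)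
  qed simp
  ultimately show ?thesis unfolding phi_def by simp
qed

lemma phi_lt: assumes "0 < a" "0 < b" shows "phi a b < (a+b)/2"
proof -
  have "a/((a+b)/2) < 2" using assms by (simp add: field_simps)
  then have "log 2 (a/((a+b)/2)) < log 2 2" using assms by (intro log_less) auto
  then have "a * log 2 (a/((a+b)/2)) < a" using assms by simp
  moreover have "b * log 2 (b/((a+b)/2)) \<le> b" 
  proof -
    have "b/((a+b)/2) \<le> 2" using assms by (simp add: field_simps)
    then have "log 2 (b/((a+b)/2)) \<le> log 2 2" using assms by (intro log_mono) auto
    then show ?thesis using assms by (simp add: mult_le_cancel_left1)
  qed
  ultimately show ?thesis unfolding phi_def by simp
qed

lemma phi_hom: assumes "0 \<le> k" shows "phi (k*a) (k*b) = k * phi a b"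
proof (cases "k = 0")
  case False
  then have "k > 0" using assms by simp
  have e: "(k*a+k*b)/2 = k*((a+b)/2)" by (simp add: algebra_simps)
  have "(k*a)/((k*a+k*b)/2) = a/((a+b)/2)" "(k*b)/((k*a+k*b)/2) = b/((a+b)/2)"
    unfolding e using \<open>k>0\<close> by simp_all
  then show ?thesis unfolding phi_def by (simp add: algebra_simps)
qed (simp add: phi_def)

lemma pmf_summable: "pmf p summable_on A"
proof -
  have "Infinite_Sum.abs_summable_on (pmf p) A"
    using abs_summable_equivalent[of "pmf p" A] pmf_abs_summable[of p A] by simp
  then show ?thesis by simp
qed

lemma infsum_pmf_1: "infsum (pmf p) UNIV = 1"
proof -
  have "infsetsum (pmf p) UNIV = infsum (pmf p) UNIV"
    by (rule infsetsum_infsum) (rule pmf_abs_summable)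
  then show ?thesis using infsetsum_pmf_eq_1[of p UNIV] by simp
qed

lemma summable_bounded:
  fixes f :: "'a \<Rightarrow> real"
  assumes "\<And>x. 0 \<le> f x" "\<And>x. f x \<le> c * pmf p x"
  shows "f summable_on A"
proof (rule summable_on_comparison_test[where f="\<lambda>x. c * pmf p x"])
  show "(\<lambda>x. c * pmf p x) summable_on A" by (intro summable_on_cmult_right pmf_summable)
qed (use assms in auto)

lemma expectation_infsum:
  fixes f :: "'a \<Rightarrow> real"
  assumes "\<And>x. \<bar>f x\<bar> \<le> c"
  shows "measure_pmf.expectation p f = infsum (\<lambda>x. pmf p x * f x) UNIV"
proof -
  have e: "measure_pmf.expectation p f = infsetsum (\<lambda>x. pmf p x * f x) UNIV"
    unfolding infsetsum_def measure_pmf_eq_density by (subst integral_density) simp_all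
  have "(\<lambda>x. norm (pmf p x * f x)) summable_on UNIV"
    by (rule summable_bounded[where c=c and p=p]) (use assms in \<open>auto simp: abs_mult\<close>, metis mult.commute mult_left_mono pmf_nonneg)
  then have "(\<lambda>x. pmf p x * f x) abs_summable_on UNIV"
    using abs_summable_equivalent by blast
  then show ?thesis using e infsetsum_infsum by metis
qed

lemma pmf_bind_infsum:
  "pmf (bind_pmf M K) z = infsum (\<lambda>y. pmf M y * pmf (K y) z) UNIV"
  unfolding pmf_bind by (rule expectation_infsum[where c=1]) (auto simp: pmf_le_1)

lemma infsum_strict_mono:
  fixes f g :: "'a \<Rightarrow> real"
  assumes "f summable_on A" "g summable_on A" "\<And>x. x \<in> A \<Longrightarrow> f x \<le> g x" "x \<in> A" "f x < g x"
  shows "infsum f A < infsum g A"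
  using has_sum_strict_mono[OF has_sum_infsum[OF assms(1)] has_sum_infsum[OF assms(2)]] assms by blast

lemma pmf_bind_pair:
  "pmf (bind_pmf M (\<lambda>y. map_pmf (\<lambda>z. (z, y)) (K y))) (z, y) = pmf M y * pmf (K y) z"
proof -
  have "pmf (bind_pmf M (\<lambda>y. map_pmf (\<lambda>z. (z, y)) (K y))) (z, y) =
      infsum (\<lambda>y'. pmf M y' * pmf (map_pmf (\<lambda>z. (z, y')) (K y')) (z,y)) UNIV"
    by (rule pmf_bind_infsum)
  also have "\<dots> = infsum (\<lambda>y'. if y' = y then pmf M y * pmf (K y) z else 0) UNIV"
  proof (rule infsum_cong)
    fix y'
    show "pmf M y' * pmf (map_pmf (\<lambda>z. (z, y')) (K y')) (z, y) = (if y' = y then pmf M y * pmf (K y) z else 0)"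
    proof (cases "y' = y")
      case True
      have "pmf (map_pmf (\<lambda>z. (z, y)) (K y)) (z, y) = pmf (K y) z"
        by (rule pmf_map_inj') (auto simp: inj_on_def)
      then show ?thesis using True by simp
    next
      case False
      then have "pmf (map_pmf (\<lambda>z. (z, y')) (K y')) (z, y) = 0"
        by (intro pmf_map_outside) auto
      then show ?thesis using False by simp
    qed
  qed
  also have "\<dots> = pmf M y * pmf (K y) z"
    by (subst infsum_cong_neutral[where T="{y}"]) auto
  finally show ?thesis .
qed

lemma phi_pmf_summable: "(\<lambda>z. phi (pmf P z) (pmf Q z)) summable_on A"
proof -
  have "(\<lambda>z. (1/2) * pmf P z + (1/2) * pmf Q z) summable_on A"
    by (intro summable_on_add summable_on_cmult_right pmf_summable)
  moreover have "phi (pmf P z) (pmf Q z) \<le> (1/2) * pmf P z + (1/2) * pmf Q z" for z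
    using phi_le[of "pmf P z" "pmf Q z"] by simp
  ultimately show ?thesis
    by (rule summable_on_comparison_test) (auto intro: phi_nonneg)
qed

lemma dpi_core:
  fixes V :: "bool \<Rightarrow> 'a pmf" and K :: "'a \<Rightarrow> 'b pmf"
  defines "a \<equiv> \<lambda>y. pmf (V True) y" and "b \<equiv> \<lambda>y. pmf (V False) y"
    and "A \<equiv> \<lambda>z. pmf (bind_pmf (V True) K) z" and "B \<equiv> \<lambda>z. pmf (bind_pmf (V False) K) z"
  shows "phi (A z) (B z) \<le> infsum (\<lambda>y. pmf (K y) z * phi (a y) (b y)) UNIV"
    and "pmf (K y0) z > 0 \<Longrightarrow> a y0 > 0 \<or> b y0 > 0 \<Longrightarrow> a y0 * B z \<noteq> b y0 * A z \<Longrightarrow>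
       phi (A z) (B z) < infsum (\<lambda>y. pmf (K y) z * phi (a y) (b y)) UNIV"
proof -
  define k where "k = (\<lambda>y. pmf (K y) z)"
  have Ad: "A z = infsum (\<lambda>y. a y * k y) UNIV" unfolding A_def a_def k_def by (rule pmf_bind_infsum)
  have Bd: "B z = infsum (\<lambda>y. b y * k y) UNIV" unfolding B_def b_def k_def by (rule pmf_bind_infsum)
  have nn: "0 \<le> a y" "0 \<le> b y" "0 \<le> k y" "k y \<le> 1" for y
    unfolding a_def b_def k_def by (auto simp: pmf_le_1)
  have sa: "(\<lambda>y. a y * k y) summable_on UNIV"
    by (rule summable_bounded[where c=1 and p="V True"]) (use nn in \<open>auto simp: a_def intro: mult_left_le\<close>)
  have sb: "(\<lambda>y. b y * k y) summable_on UNIV"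
    by (rule summable_bounded[where c=1 and p="V False"]) (use nn in \<open>auto simp: b_def intro: mult_left_le\<close>)
  have Age: "a y * k y \<le> A z" for y
  proof -
    have "infsum (\<lambda>y'. a y' * k y') {y} \<le> infsum (\<lambda>y'. a y' * k y') UNIV"
      by (rule infsum_mono_neutral) (use sa nn in auto)
    then show ?thesis using Ad by simp
  qed
  have Bge: "b y * k y \<le> B z" for y
  proof -
    have "infsum (\<lambda>y'. b y' * k y') {y} \<le> infsum (\<lambda>y'. b y' * k y') UNIV"
      by (rule infsum_mono_neutral) (use sb nn in auto)
    then show ?thesis using Bd by simp
  qed
  have A0: "0 \<le> A z" "0 \<le> B z" unfolding A_def B_def by simp_all
  define LA where "LA = log 2 (A z/((A z+B z)/2))"
  define LB where "LB = log 2 (B z/((A z+B z)/2))"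
  define lin where "lin = (\<lambda>y. (1/2)*((a y * k y)*LA + (b y * k y)*LB))"
  have slin: "lin summable_on UNIV" unfolding lin_def
    by (intro summable_on_cmult_right summable_on_add summable_on_cmult_left sa sb)
  have "phi (A z) (B z) = (1/2)*(A z * LA + B z * LB)" unfolding phi_def LA_def LB_def by simp
  also have "\<dots> = infsum lin UNIV" unfolding lin_def Ad Bd
    by (subst infsum_cmult_right') (simp add: infsum_add summable_on_cmult_left sa sb infsum_cmult_left')
  finally have phiA: "phi (A z) (B z) = infsum lin UNIV" .
  have sphi: "(\<lambda>y. k y * phi (a y) (b y)) summable_on UNIV"
  proof -
    have "(\<lambda>y. phi (a y) (b y)) summable_on UNIV" unfolding a_def b_def by (rule phi_pmf_summable)
    then have "(\<lambda>y. phi (a y) (b y) * 1) summable_on UNIV" by simp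
    moreover have "k y * phi (a y) (b y) \<le> phi (a y) (b y) * 1" for y
      using mult_left_le_one_le[OF phi_nonneg[OF nn(1,2)] nn(3) nn(4)] by simp
    ultimately show ?thesis
      by (rule summable_on_comparison_test) (use nn phi_nonneg in auto)
  qed
  have pt: "lin y \<le> k y * phi (a y) (b y)" for y
  proof -
    have "lin y \<le> phi (a y * k y) (b y * k y)" unfolding lin_def LA_def LB_def
      by (rule phi_lin) (use nn Age Bge A0 in \<open>auto intro: order.strict_trans2\<close>)
    also have "\<dots> = k y * phi (a y) (b y)" using phi_hom[of "k y" "a y" "b y"] nn by (simp add: mult.commute)
    finally show ?thesis .
  qed
  show "phi (A z) (B z) \<le> infsum (\<lambda>y. pmf (K y) z * phi (a y) (b y)) UNIV"
    using infsum_mono[OF slin sphi pt] unfolding phiA k_def by simp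
  assume k0: "pmf (K y0) z > 0" and ab: "a y0 > 0 \<or> b y0 > 0" and ne: "a y0 * B z \<noteq> b y0 * A z"
  have "lin y0 < phi (a y0 * k y0) (b y0 * k y0)" unfolding lin_def LA_def LB_def
  proof (rule phi_lin_strict)
    show "0 < a y0 * k y0 \<or> 0 < b y0 * k y0" using ab k0 nn unfolding k_def by auto
    show "a y0 * k y0 * B z \<noteq> b y0 * k y0 * A z" using ne k0 unfolding k_def by auto
  qed (use nn Age Bge A0 in \<open>auto intro: order.strict_trans2\<close>)
  also have "\<dots> = k y0 * phi (a y0) (b y0)" using phi_hom[of "k y0" "a y0" "b y0"] nn by (simp add: mult.commute)
  finally have "lin y0 < k y0 * phi (a y0) (b y0)" .
  then show "phi (A z) (B z) < infsum (\<lambda>y. pmf (K y) z * phi (a y) (b y)) UNIV"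
    using infsum_strict_mono[OF slin sphi pt, of y0] \<open>lin y0 < k y0 * phi (a y0) (b y0)\<close> unfolding phiA k_def by simp
qed


lemma dpi:
  fixes V :: "bool \<Rightarrow> 'a pmf" and K :: "'a \<Rightarrow> 'b pmf"
  shows "sym_cap (\<lambda>x. bind_pmf (V x) K) \<le> sym_cap V"
    and "pmf (K y0) z0 > 0 \<Longrightarrow> pmf (V True) y0 > 0 \<or> pmf (V False) y0 > 0 \<Longrightarrow>
       pmf (V True) y0 * pmf (bind_pmf (V False) K) z0 \<noteq> pmf (V False) y0 * pmf (bind_pmf (V True) K) z0 \<Longrightarrow>
       sym_cap (\<lambda>x. bind_pmf (V x) K) < sym_cap V"
proof -
  define a where "a = (\<lambda>y. pmf (V True) y)"
  define b where "b = (\<lambda>y. pmf (V False) y)"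
  define F where "F = (\<lambda>z y. pmf (K y) z * phi (a y) (b y))"
  define J where "J = (\<lambda>x. bind_pmf (V x) (\<lambda>y. map_pmf (\<lambda>z. (z, y)) (K y)))"
  have nn: "0 \<le> a y" "0 \<le> b y" for y unfolding a_def b_def by auto
  have Fb: "F z y \<le> (1/2) * pmf (J True) (z,y) + (1/2) * pmf (J False) (z,y)" for z y
  proof -
    have "F z y \<le> pmf (K y) z * ((a y + b y)/2)"
      unfolding F_def by (intro mult_left_mono phi_le nn) auto
    then show ?thesis unfolding J_def pmf_bind_pair a_def b_def by (simp add: algebra_simps)
  qed
  have F0: "0 \<le> F z y" for z y unfolding F_def using phi_nonneg nn by auto
  have sF: "(\<lambda>(z,y). F z y) summable_on UNIV \<times> UNIV"
  proof (rule summable_on_comparison_test)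
    show "(\<lambda>p. (1/2) * pmf (J True) p + (1/2) * pmf (J False) p) summable_on UNIV \<times> UNIV"
      by (intro summable_on_add summable_on_cmult_right pmf_summable)
  qed (use Fb F0 in auto)
  have sF2: "(\<lambda>z. infsum (F z) UNIV) summable_on UNIV"
    using summable_on_Sigma_banach[of F UNIV "\<lambda>_. UNIV"] sF by simp
  have swap: "infsum (\<lambda>z. infsum (F z) UNIV) UNIV = infsum (\<lambda>y. infsum (\<lambda>z. F z y) UNIV) UNIV"
    by (rule infsum_swap_banach) (use sF in simp)
  have inner: "infsum (\<lambda>z. F z y) UNIV = phi (a y) (b y)" for y
    unfolding F_def by (simp add: infsum_cmult_left' infsum_pmf_1)
  have R: "sym_cap V = infsum (\<lambda>z. infsum (F z) UNIV) UNIV"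
    unfolding sym_cap_alt swap inner a_def b_def ..
  have L: "sym_cap (\<lambda>x. bind_pmf (V x) K) = infsum (\<lambda>z. phi (pmf (bind_pmf (V True) K) z) (pmf (bind_pmf (V False) K) z)) UNIV"
    by (rule sym_cap_alt)
  have pw: "phi (pmf (bind_pmf (V True) K) z) (pmf (bind_pmf (V False) K) z) \<le> infsum (F z) UNIV" for z
    unfolding F_def a_def b_def by (rule dpi_core(1))
  show "sym_cap (\<lambda>x. bind_pmf (V x) K) \<le> sym_cap V"
    unfolding L R by (rule infsum_mono[OF phi_pmf_summable sF2 pw])
  assume h: "pmf (K y0) z0 > 0" "pmf (V True) y0 > 0 \<or> pmf (V False) y0 > 0"
    "pmf (V True) y0 * pmf (bind_pmf (V False) K) z0 \<noteq> pmf (V False) y0 * pmf (bind_pmf (V True) K) z0"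
  have "phi (pmf (bind_pmf (V True) K) z0) (pmf (bind_pmf (V False) K) z0) < infsum (F z0) UNIV"
    unfolding F_def a_def b_def by (rule dpi_core(2)[OF h])
  then show "sym_cap (\<lambda>x. bind_pmf (V x) K) < sym_cap V"
    unfolding L R by (intro infsum_strict_mono[OF phi_pmf_summable sF2 pw]) auto
qed

lemma dpi_cross:
  fixes V :: "bool \<Rightarrow> 'a pmf" and K :: "'a \<Rightarrow> 'b pmf"
  assumes "pmf (K y1) z > 0" "pmf (K y2) z > 0"
    "pmf (V True) y1 * pmf (V False) y2 \<noteq> pmf (V True) y2 * pmf (V False) y1"
  shows "sym_cap (\<lambda>x. bind_pmf (V x) K) < sym_cap V"
proof -
  define A where "A = pmf (bind_pmf (V True) K) z"
  define B where "B = pmf (bind_pmf (V False) K) z"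
  have ge: "pmf (V x) y * pmf (K y) z \<le> pmf (bind_pmf (V x) K) z" for x y
  proof -
    have s: "(\<lambda>y. pmf (V x) y * pmf (K y) z) summable_on UNIV"
      by (rule summable_bounded[where c=1 and p="V x"]) (auto intro: mult_left_le simp: pmf_le_1)
    have "infsum (\<lambda>y'. pmf (V x) y' * pmf (K y') z) {y} \<le> infsum (\<lambda>y'. pmf (V x) y' * pmf (K y') z) UNIV"
      by (rule infsum_mono_neutral) (use s in auto)
    then show ?thesis by (simp add: pmf_bind_infsum)
  qed
  show ?thesis
  proof (rule ccontr)
    assume "\<not> ?thesis"
    then have no: "\<And>y. pmf (K y) z > 0 \<Longrightarrow> pmf (V True) y > 0 \<or> pmf (V False) y > 0 \<Longrightarrow>
       pmf (V True) y * B = pmf (V False) y * A"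
      using dpi(2)[of K _ z V] unfolding A_def B_def by fastforce
    have nz: "pmf (V True) y1 > 0 \<or> pmf (V False) y1 > 0" "pmf (V True) y2 > 0 \<or> pmf (V False) y2 > 0"
      using assms(3) pmf_nonneg[of "V True" y1] pmf_nonneg[of "V False" y1]
        pmf_nonneg[of "V True" y2] pmf_nonneg[of "V False" y2]
      by (metis mult_zero_left mult_zero_right order_le_less)+
    have e1: "pmf (V True) y1 * B = pmf (V False) y1 * A" using no[OF assms(1) nz(1)] .
    have e2: "pmf (V True) y2 * B = pmf (V False) y2 * A" using no[OF assms(2) nz(2)] .
    have "A > 0"
    proof -
      have "pmf (V True) y1 > 0 \<or> pmf (V True) y2 > 0" using assms(3) pmf_nonneg[of "V True" y1] pmf_nonneg[of "V True" y2]
        by (metis mult_zero_left mult_zero_right order_le_less)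
      then show ?thesis using ge[of True y1] ge[of True y2] assms(1,2) unfolding A_def
        by (meson mult_pos_pos order.strict_trans2)
    qed
    have "B > 0"
    proof -
      have "pmf (V False) y1 > 0 \<or> pmf (V False) y2 > 0" using assms(3) pmf_nonneg[of "V False" y1] pmf_nonneg[of "V False" y2]
        by (metis mult_zero_left mult_zero_right order_le_less)
      then show ?thesis using ge[of False y1] ge[of False y2] assms(1,2) unfolding B_def
        by (meson mult_pos_pos order.strict_trans2)
    qed
    have "pmf (V True) y1 * pmf (V False) y2 * (A * B) = pmf (V True) y2 * pmf (V False) y1 * (A * B)"
      using e1 e2 by (metis mult.assoc mult.commute)
    then show False using assms(3) \<open>A>0\<close> \<open>B>0\<close> by simp
  qed
qed

lemma sym_cap_useless: "V True = V False \<Longrightarrow> sym_cap V = 0"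
  unfolding sym_cap_alt by (simp add: phi_same)

lemma sym_cap_perfect:
  assumes "\<And>z. pmf (V True) z = 0 \<or> pmf (V False) z = 0"
  shows "sym_cap V = 1"
proof -
  have "phi (pmf (V True) z) (pmf (V False) z) = (1/2) * pmf (V True) z + (1/2) * pmf (V False) z" for z
    using assms[of z] by (auto simp: phi_zero)
  then have "sym_cap V = infsum (\<lambda>z. (1/2) * pmf (V True) z + (1/2) * pmf (V False) z) UNIV"
    unfolding sym_cap_alt by simp
  also have "\<dots> = 1"
  proof -
    have s: "(\<lambda>z. (1/2) * pmf (V x) z) summable_on UNIV" for x
      by (intro summable_on_cmult_right pmf_summable)
    show ?thesis
      by (simp only: infsum_add[OF s s] infsum_cmult_right' infsum_pmf_1)
  qed
  finally show ?thesis .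
qed

lemma sym_cap_flip: "sym_cap (\<lambda>x. V (\<not> x)) = sym_cap V"
  unfolding sym_cap_alt by (simp add: phi_sym)

lemma pmf_map_Pair: "pmf (map_pmf (Pair w) M) (v, z) = (if w = v then pmf M z else 0)"
proof (cases "w = v")
  case True
  then show ?thesis by (simp add: pmf_map_inj' inj_on_def)
next
  case False
  then show ?thesis by (subst pmf_map_outside) auto
qed

lemma sym_cap_mix:
  fixes C :: "'v \<Rightarrow> bool \<Rightarrow> 'z pmf"
  assumes "finite D" "D \<noteq> {}"
  shows "sym_cap (\<lambda>x. bind_pmf (pmf_of_set D) (\<lambda>v. map_pmf (Pair v) (C v x))) =
         (\<Sum>v\<in>D. sym_cap (C v)) / card D"
proof -
  define M where "M = (\<lambda>x. bind_pmf (pmf_of_set D) (\<lambda>v. map_pmf (Pair v) (C v x)))"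
  have pM: "pmf (M x) (v, z) = (if v \<in> D then pmf (C v x) z / card D else 0)" for x v z
  proof -
    have "pmf (M x) (v, z) = (\<Sum>w\<in>D. pmf (map_pmf (Pair w) (C w x)) (v,z)) / card D"
      unfolding M_def by (rule pmf_bind_pmf_of_set[OF assms(2,1)])
    also have "(\<Sum>w\<in>D. pmf (map_pmf (Pair w) (C w x)) (v,z)) = (\<Sum>w\<in>D. if w = v then pmf (C v x) z else 0)"
      by (intro sum.cong) (auto simp: pmf_map_Pair)
    also have "\<dots> = (if v \<in> D then pmf (C v x) z else 0)"
      using assms by (simp add: sum.delta')
    finally show ?thesis by simp
  qed
  define f where "f = (\<lambda>v z. phi (pmf (M True) (v,z)) (pmf (M False) (v,z)))"
  have sf: "(\<lambda>(v,z). f v z) summable_on Sigma UNIV (\<lambda>_. UNIV)"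
    unfolding f_def using phi_pmf_summable[of "M True" "M False" UNIV] by (simp add: case_prod_beta')
  have "sym_cap M = infsum (\<lambda>(v,z). f v z) UNIV"
    unfolding sym_cap_alt f_def by (simp add: case_prod_beta')
  also have "\<dots> = infsum (\<lambda>v. infsum (f v) UNIV) UNIV"
    using infsum_Sigma'_banach[OF sf] by simp
  also have "\<dots> = infsum (\<lambda>v. infsum (f v) UNIV) D"
    by (rule infsum_cong_neutral) (auto simp: f_def pM phi_same)
  also have "\<dots> = (\<Sum>v\<in>D. sym_cap (C v) / card D)"
  proof -
    have "infsum (f v) UNIV = sym_cap (C v) / card D" if "v \<in> D" for v
    proof -
      have "f v z = (1 / card D) * phi (pmf (C v True) z) (pmf (C v False) z)" for z
        using that phi_hom[of "1 / card D" "pmf (C v True) z" "pmf (C v False) z"]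
        by (simp add: f_def pM)
      then have fv: "f v = (\<lambda>z. phi (pmf (C v True) z) (pmf (C v False) z) * (1 / card D))" by auto
      show ?thesis unfolding sym_cap_alt fv infsum_cmult_left' by simp
    qed
    then show ?thesis using assms by simp
  qed
  finally show ?thesis unfolding M_def by (simp add: sum_divide_distrib)
qed

lemma sym_cap_mask:
  "sym_cap (\<lambda>x. bind_pmf (pmf_of_set UNIV) (\<lambda>v. map_pmf (Pair v) (W (x \<noteq> v)))) = sym_cap W"
proof -
  have "sym_cap (\<lambda>x. bind_pmf (pmf_of_set UNIV) (\<lambda>v. map_pmf (Pair v) ((\<lambda>v x. W (x \<noteq> v)) v x)))
      = (\<Sum>v\<in>UNIV. sym_cap ((\<lambda>v x. W (x \<noteq> v)) v)) / card (UNIV :: bool set)"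
    by (rule sym_cap_mix) auto
  also have "\<dots> = sym_cap W"
    using sym_cap_flip[of W] by (simp add: UNIV_bool)
  finally show ?thesis by simp
qed

fun cx :: "LR list \<Rightarrow> bool list \<Rightarrow> bool list" where
  "cx (s # t # \<sigma>) (a # c # u) = (let r = cx (t # \<sigma>) (c # u) in (a \<noteq> (if t = L then hd r else c)) # r)"
| "cx \<sigma> u = u"

lemma length_cx [simp]: "length (cx \<sigma> u) = length u"
  by (induction \<sigma> u rule: cx.induct) (auto simp: Let_def)

lemma cx_nth:
  assumes "length \<sigma> = length u" "e < length u"
  shows "cx \<sigma> u ! e = (if e + 1 < length u then (u!e \<noteq> (if \<sigma>!(e+1) = L then cx \<sigma> u ! (e+1) else u!(e+1))) else u!e)"
  using assms
proof (induction \<sigma> u arbitrary: e rule: cx.induct)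
  case (1 s t \<sigma> a c u)
  show ?case
  proof (cases e)
    case 0
    have "cx (t # \<sigma>) (c # u) \<noteq> []" using length_cx[of "t # \<sigma>" "c # u"] by (metis length_0_conv list.distinct(1))
    then show ?thesis using 0 by (cases "cx (t # \<sigma>) (c # u)") (auto simp: Let_def)
  next
    case (Suc e')
    have "cx (t # \<sigma>) (c # u) ! e' = (if e' + 1 < length (c#u) then ((c#u)!e' \<noteq> (if (t#\<sigma>)!(e'+1) = L then cx (t#\<sigma>) (c#u) ! (e'+1) else (c#u)!(e'+1))) else (c#u)!e')"
      using 1 Suc by (intro "1.IH") auto
    then show ?thesis using Suc by (simp add: Let_def)
  qed
qed auto

definition upd :: "nat \<Rightarrow> bool list \<Rightarrow> bool list" where
  "upd k x = x[k - 1 := (x ! (k - 1) \<noteq> x ! k)]"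

lemma circuit_fold: "circuit p m u = fold upd (sort_key p [1..<m]) u"
  unfolding circuit_def upd_def ..

lemma length_fold_upd: "length (fold upd ks u) = length u"
  by (induction ks arbitrary: u) (auto simp: upd_def)

lemma fold_char:
  fixes p :: "nat \<Rightarrow> real"
  assumes "distinct ks" "sorted_wrt (\<lambda>i j. p i < p j) ks" "set ks \<subseteq> {1..<length u}"
  shows "\<forall>e < length u. fold upd ks u ! e =
    (if e + 1 \<in> set ks then (u!e \<noteq> (if e + 2 \<in> set ks \<and> p (e+2) < p (e+1) then fold upd ks u ! (e+1) else u!(e+1)))
     else u!e)"
  using assms
proof (induction ks rule: rev_induct)
  case Nil
  then show ?case by simp
next
  case (snoc k ks)
  define Rr where "Rr = fold upd ks u"
  have k: "k \<notin> set ks" "1 \<le> k" "k < length u" using snoc.prems by auto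
  have max: "\<And>i. i \<in> set ks \<Longrightarrow> p i < p k" using snoc.prems(2) by (auto simp: sorted_wrt_append)
  have IH: "\<forall>e < length u. Rr ! e =
    (if e + 1 \<in> set ks then (u!e \<noteq> (if e + 2 \<in> set ks \<and> p (e+2) < p (e+1) then Rr ! (e+1) else u!(e+1)))
     else u!e)"
    unfolding Rr_def using snoc.prems by (intro snoc.IH) (auto simp: sorted_wrt_append)
  have lenR: "length Rr = length u" unfolding Rr_def by (rule length_fold_upd)
  have res: "fold upd (ks @ [k]) u = Rr[k - 1 := (Rr ! (k - 1) \<noteq> Rr ! k)]"
    by (simp add: Rr_def upd_def)
  have Rk1: "Rr ! (k - 1) = u ! (k - 1)" using IH[rule_format, of "k-1"] k by auto
  have Rk: "Rr ! k = (if k + 1 \<in> set ks then Rr ! k else u ! k)"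
    using IH[rule_format, of k] k by auto
  show ?case
  proof (intro allI impI)
    fix e assume e: "e < length u"
    show "fold upd (ks @ [k]) u ! e =
      (if e + 1 \<in> set (ks @ [k]) then (u!e \<noteq> (if e + 2 \<in> set (ks @ [k]) \<and> p (e+2) < p (e+1) then fold upd (ks @ [k]) u ! (e+1) else u!(e+1)))
       else u!e)"
    proof (cases "e = k - 1")
      case True
      have "e + 1 = k" using True k by simp
      moreover have "fold upd (ks @ [k]) u ! e = (u ! (k-1) \<noteq> Rr ! k)" using True res lenR e Rk1 by simp
      moreover have "fold upd (ks @ [k]) u ! (e+1) = Rr ! k" using True res lenR k by simp
      moreover have "(k + 1 \<in> set ks) = (k + 1 \<in> set ks \<and> p (k+1) < p k)" using max by auto
      ultimately show ?thesis using Rk k True by auto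
    next
      case False
      have eq: "fold upd (ks @ [k]) u ! e = Rr ! e" using False res by simp
      have "e + 1 \<noteq> k" using False by simp
      have cond: "(e + 2 \<in> set (ks @ [k]) \<and> p (e+2) < p (e+1)) = (e + 2 \<in> set ks \<and> p (e+2) < p (e+1))"
        if "e + 1 \<in> set ks"
      proof (cases "e + 2 = k")
        case True
        then show ?thesis using max[OF that] k by auto
      qed simp
      have nxt: "fold upd (ks @ [k]) u ! (e+1) = Rr ! (e+1)" if "e + 2 \<in> set ks"
      proof -
        have "e + 1 \<noteq> k - 1" using that k by auto
        then show ?thesis unfolding res by simp
      qed
      show ?thesis using IH[rule_format, OF e] eq \<open>e + 1 \<noteq> k\<close> cond nxt by (auto; linarith)
    qed
  qed
qed

lemma list_eq_backward:
  fixes x y :: "bool list"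
  assumes "length x = m" "length y = m"
    and "\<And>e. e < m \<Longrightarrow> x ! e = F e (x ! (e+1))" "\<And>e. e < m \<Longrightarrow> y ! e = F e (y ! (e+1))"
    and "\<And>e a b. e + 1 \<ge> m \<Longrightarrow> F e a = F e b"
  shows "x = y"
proof -
  have "\<forall>e. m - n \<le> e \<longrightarrow> e < m \<longrightarrow> x ! e = y ! e" for n
  proof (induction n)
    case 0
    then show ?case by simp
  next
    case (Suc n)
    show ?case
    proof (intro allI impI)
      fix e assume e: "m - Suc n \<le> e" "e < m"
      show "x ! e = y ! e"
      proof (cases "e + 1 < m")
        case True
        then have "x ! (e+1) = y ! (e+1)" using Suc e by auto
        then show ?thesis using assms(3)[OF e(2)] assms(4)[OF e(2)] by simp
      next
        case False
        then show ?thesis using assms(3,4,5)[of e] e by auto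
      qed
    qed
  qed
  from this[of m] have "\<forall>e<m. x!e = y!e" by simp
  then show ?thesis using assms(1,2) by (intro nth_equalityI) auto
qed

lemma circuit_cx:
  assumes "valid_order \<sigma> p" "length \<sigma> = m" "length u = m" "m \<ge> 1" "\<sigma> ! (m - 1) = R"
  shows "circuit p m u = cx \<sigma> u"
proof -
  define ks where "ks = sort_key p [1..<m]"
  have inj: "inj_on p {1..<m}" using assms unfolding valid_order_def by auto
  have sk: "set ks = {1..<m}" "distinct ks" unfolding ks_def by auto
  have "sorted (map p ks)" unfolding ks_def by (rule sorted_sort_key)
  moreover have "distinct (map p ks)" using sk inj by (simp add: distinct_map)
  ultimately have "sorted_wrt (<) (map p ks)" by (simp add: strict_sorted_iff)
  then have sw: "sorted_wrt (\<lambda>i j. p i < p j) ks" by (simp add: sorted_wrt_map)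
  have fc: "\<forall>e < length u. fold upd ks u ! e =
    (if e + 1 \<in> set ks then (u!e \<noteq> (if e + 2 \<in> set ks \<and> p (e+2) < p (e+1) then fold upd ks u ! (e+1) else u!(e+1)))
     else u!e)"
    using sk sw assms by (intro fold_char) auto
  have key: "(e + 2 < m \<and> p (e+2) < p (e+1)) = (\<sigma> ! (e+1) = L)" if "e + 1 < m" for e
  proof (cases "e + 2 < m")
    case True
    then have "e + 2 \<in> {2..<m}" by simp
    then have "(\<sigma> ! (e+1) = L \<longrightarrow> p (e+2) < p (e+1)) \<and> (\<sigma> ! (e+1) = R \<longrightarrow> p (e+2) > p (e+1))"
      using assms(1,2) unfolding valid_order_def by fastforce
    then show ?thesis using True by (cases "\<sigma> ! (e+1)") auto
  next
    case False
    then have "e + 1 = m - 1" using that by simp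
    then show ?thesis using False assms(5) by simp
  qed
  define F where "F = (\<lambda>e a. if e + 1 < m then (u!e \<noteq> (if \<sigma> ! (e+1) = L then a else u!(e+1))) else u!e)"
  show ?thesis
    unfolding circuit_fold ks_def[symmetric]
  proof (rule list_eq_backward[where F=F and m=m])
    show "length (fold upd ks u) = m" by (simp add: length_fold_upd assms)
    show "length (cx \<sigma> u) = m" by (simp add: assms)
    fix e assume e: "e < m"
    show "fold upd ks u ! e = F e (fold upd ks u ! (e + 1))"
      using fc[rule_format, of e] e assms(3) sk key[of e] unfolding F_def by auto
    show "cx \<sigma> u ! e = F e (cx \<sigma> u ! (e + 1))"
      using cx_nth[of \<sigma> u e] e assms unfolding F_def by auto
  next
    fix e a b assume "m \<le> e + 1" then show "F e a = F e b" unfolding F_def by simp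
  qed
qed

abbreviation coin :: "bool pmf" where "coin \<equiv> pmf_of_set UNIV"

definition unif :: "nat \<Rightarrow> bool list pmf" where
  "unif n = pmf_of_set {xs. length xs = n}"

definition co :: "'z channel \<Rightarrow> bool list \<Rightarrow> 'z list pmf" where
  "co W xs = chan_out (\<lambda>_. W) 1 xs"

lemma chan_out_const: "chan_out (\<lambda>_. W) k xs = chan_out (\<lambda>_. W) 1 xs"
proof (induction xs arbitrary: k)
  case (Cons x xs)
  have "chan_out (\<lambda>_. W) (Suc k) xs = chan_out (\<lambda>_. W) (Suc (Suc 0)) xs"
    using Cons.IH[of "Suc k"] Cons.IH[of "Suc (Suc 0)"] by simp
  then show ?case by simp
qed simp

lemma app_Cons_fun: "((@) (x # xs)) = (\<lambda>b. x # (xs @ b))"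
  by auto

lemma map_app_Nil [simp]: "map_pmf (\<lambda>b. [] @ b) M = M"
proof -
  have "(\<lambda>b. [] @ b) = (\<lambda>b. b)" by simp
  then show ?thesis by (simp add: map_pmf_ident)
qed

lemma co_Nil [simp]: "co W [] = return_pmf []"
  unfolding co_def by simp

lemma co_Cons: "co W (x # xs) = bind_pmf (W x) (\<lambda>z. map_pmf (Cons z) (co W xs))"
  unfolding co_def by (simp add: chan_out_const[of W "Suc (Suc 0)"] map_pmf_def)

lemma co_append: "co W (xs @ ys) = bind_pmf (co W xs) (\<lambda>a. map_pmf (\<lambda>b. a @ b) (co W ys))"
proof (induction xs)
  case Nil
  then show ?case by (simp add: bind_return_pmf)
next
  case (Cons x xs)
  show ?case
    by (simp add: co_Cons Cons bind_assoc_pmf map_bind_pmf bind_map_pmf map_pmf_comp app_Cons_fun)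
qed

lemma set_co: "zs \<in> set_pmf (co W xs) \<Longrightarrow> length zs = length xs"
proof (induction xs arbitrary: zs)
  case Nil
  then show ?case by simp
next
  case (Cons x xs)
  then show ?case by (auto simp: co_Cons)
qed

lemma pmf_Cons_pair: "pmf (bind_pmf M (\<lambda>z. map_pmf (Cons z) N)) (z # zs) = pmf M z * pmf N zs"
proof -
  have "bind_pmf M (\<lambda>z. map_pmf (Cons z) N) = map_pmf (\<lambda>(a,b). a # b) (pair_pmf M N)"
    by (simp add: pair_pmf_def map_bind_pmf map_pmf_def bind_assoc_pmf bind_return_pmf)
  moreover have "pmf (map_pmf (\<lambda>(a,b). a # b) (pair_pmf M N)) ((\<lambda>(a,b). a # b) (z, zs)) = pmf (pair_pmf M N) (z, zs)"
    by (rule pmf_map_inj') (auto simp: inj_def)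
  ultimately show ?thesis by (simp add: pmf_pair)
qed

lemma pmf_co_Cons: "pmf (co W (x # xs)) (z # zs) = pmf (W x) z * pmf (co W xs) zs"
  unfolding co_Cons by (rule pmf_Cons_pair)

lemma pmf_co_replicate:
  assumes "\<And>x. pmf (W x) z > 0"
  shows "pmf (co W xs) (replicate (length xs) z) > 0"
  by (induction xs) (simp_all add: pmf_co_Cons assms)

lemma map_last_co: "xs \<noteq> [] \<Longrightarrow> map_pmf last (co W xs) = W (last xs)"
proof (induction xs)
  case Nil
  then show ?case by simp
next
  case (Cons x xs)
  show ?case
  proof (cases "xs = []")
    case True
    then show ?thesis by (simp add: co_Cons map_bind_pmf map_pmf_comp bind_return_pmf')
  next
    case False
    have "map_pmf last (co W (x # xs)) = bind_pmf (W x) (\<lambda>z. map_pmf (\<lambda>zs. last (z # zs)) (co W xs))"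
      by (simp add: co_Cons map_bind_pmf map_pmf_comp)
    also have "\<dots> = bind_pmf (W x) (\<lambda>z. map_pmf last (co W xs))"
    proof (intro bind_pmf_cong refl map_pmf_cong)
      fix z zs assume "zs \<in> set_pmf (co W xs)"
      then have "zs \<noteq> []" using set_co[of zs W xs] False by auto
      then show "last (z # zs) = last zs" by simp
    qed
    also have "\<dots> = W (last xs)" using Cons False by simp
    finally show ?thesis using False by simp
  qed
qed

lemma map_hd_co: "map_pmf hd (co W (x # xs)) = W x"
  by (simp add: co_Cons map_bind_pmf map_pmf_comp bind_return_pmf')

lemma card_lists: "card {xs :: bool list. length xs = n} = 2 ^ n"
  using card_lists_length_eq[of "UNIV :: bool set" n] by simp

lemma finite_lists: "finite {xs :: bool list. length xs = n}"
  using finite_lists_length_eq[of "UNIV :: bool set" n] by simp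

lemma lists_ne: "{xs :: bool list. length xs = n} \<noteq> {}"
  by (metis (mono_tags, lifting) empty_Collect_eq length_replicate)

lemma pmf_unif: "pmf (unif n) xs = (if length xs = n then 1 / 2 ^ n else 0)"
  unfolding unif_def using finite_lists[of n] lists_ne[of n] by (simp add: card_lists)

lemma set_unif: "set_pmf (unif n) = {xs. length xs = n}"
  unfolding unif_def using finite_lists[of n] lists_ne[of n] by simp

lemma pmf_coin: "pmf coin a = 1/2"
  by (simp add: UNIV_bool)

lemma unif_0: "unif 0 = return_pmf []"
  by (rule pmf_eqI) (auto simp: pmf_unif)

lemma unif_Suc: "unif (Suc n) = bind_pmf coin (\<lambda>a. map_pmf (Cons a) (unif n))"
proof (rule pmf_eqI)
  fix xs :: "bool list"
  have r: "pmf (bind_pmf coin (\<lambda>a. map_pmf (Cons a) (unif n))) xs = (\<Sum>a\<in>UNIV. pmf (map_pmf (Cons a) (unif n)) xs) / 2"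
    by (subst pmf_bind_pmf_of_set) (auto simp: UNIV_bool)
  show "pmf (unif (Suc n)) xs = pmf (bind_pmf coin (\<lambda>a. map_pmf (Cons a) (unif n))) xs"
  proof (cases xs)
    case Nil
    have "pmf (map_pmf (Cons a) (unif n)) [] = 0" for a by (rule pmf_map_outside) auto
    then show ?thesis unfolding r using Nil by (simp add: pmf_unif)
  next
    case (Cons y ys)
    have "pmf (map_pmf (Cons a) (unif n)) (y # ys) = (if a = y then pmf (unif n) ys else 0)" for a
    proof (cases "a = y")
      case True
      then show ?thesis by (simp add: pmf_map_inj')
    next
      case False
      then show ?thesis by (subst pmf_map_outside) auto
    qed
    then show ?thesis unfolding r using Cons by (simp add: pmf_unif UNIV_bool)
  qed
qed

lemma unif_add: "unif (n1 + n2) = bind_pmf (unif n1) (\<lambda>xs. map_pmf (\<lambda>ys. xs @ ys) (unif n2))"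
proof (induction n1)
  case 0
  then show ?case by (simp add: unif_0 bind_return_pmf)
next
  case (Suc n1)
  show ?case
    by (simp add: unif_Suc Suc bind_assoc_pmf map_bind_pmf bind_map_pmf map_pmf_comp app_Cons_fun)
qed



lemma coin_flip: "map_pmf (\<lambda>c. c \<noteq> d) coin = coin"
proof (rule pmf_eqI)
  fix x :: bool
  have inj: "inj (\<lambda>c. c \<noteq> d)" by (auto simp: inj_def)
  have "pmf (map_pmf (\<lambda>c. c \<noteq> d) coin) ((\<lambda>c. c \<noteq> d) (x \<noteq> d)) = pmf coin (x \<noteq> d)"
    by (rule pmf_map_inj'[OF inj])
  moreover have "(\<lambda>c. c \<noteq> d) (x \<noteq> d) = x" by auto
  ultimately show "pmf (map_pmf (\<lambda>c. c \<noteq> d) coin) x = pmf coin x" by (simp only: pmf_coin)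
qed
lemma map_last_unif: "map_pmf last (unif (Suc n)) = coin"
proof (induction n)
  case 0
  have "map_pmf last (unif (Suc 0)) = bind_pmf coin (\<lambda>a. map_pmf last (map_pmf (Cons a) (return_pmf [])))"
    by (simp only: unif_Suc unif_0 map_bind_pmf)
  also have "\<dots> = bind_pmf coin return_pmf" by simp
  finally show ?case by (simp add: bind_return_pmf')
next
  case (Suc n)
  have "map_pmf last (unif (Suc (Suc n))) = bind_pmf coin (\<lambda>a. map_pmf last (unif (Suc n)))"
  proof -
    have "map_pmf last (unif (Suc (Suc n))) = bind_pmf coin (\<lambda>a. map_pmf (\<lambda>xs. last (a # xs)) (unif (Suc n)))"
      by (simp add: unif_Suc[of "Suc n"] map_bind_pmf map_pmf_comp)
    also have "\<dots> = bind_pmf coin (\<lambda>a. map_pmf last (unif (Suc n)))"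
      by (intro bind_pmf_cong refl map_pmf_cong) (auto simp: set_unif)
    finally show ?thesis .
  qed
  then show ?case using Suc by simp
qed

lemma coin_reparam: "bind_pmf coin (\<lambda>c. f (c \<noteq> d)) = bind_pmf coin f"
proof -
  have "bind_pmf coin (\<lambda>c. f (c \<noteq> d)) = bind_pmf (map_pmf (\<lambda>c. c \<noteq> d) coin) f"
    by (simp only: bind_map_pmf)
  also have "\<dots> = bind_pmf coin f" by (simp only: coin_flip)
  finally show ?thesis .
qed

lemma pmf_of_set_times:
  assumes "finite A" "A \<noteq> {}" "finite B" "B \<noteq> {}"
  shows "pmf_of_set (A \<times> B) = pair_pmf (pmf_of_set A) (pmf_of_set B)"
proof (rule pmf_eqI)
  fix x :: "'a \<times> 'b"
  obtain a b where x: "x = (a, b)" by (cases x)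
  have c: "card (A \<times> B) = card A * card B" by (rule card_cartesian_product)
  show "pmf (pmf_of_set (A \<times> B)) x = pmf (pair_pmf (pmf_of_set A) (pmf_of_set B)) x"
    unfolding x pmf_pair using assms by (simp add: c split: split_indicator)
qed

lemma fixed_entry:
  assumes "1 \<le> k" "k \<le> m"
  shows "pmf_of_set {us :: bool list. length us = m \<and> us ! (k - 1) = b} =
    bind_pmf (unif (k - 1)) (\<lambda>l. map_pmf (\<lambda>r. l @ b # r) (unif (m - k)))"
proof -
  define A where "A = {xs :: bool list. length xs = k - 1}"
  define B where "B = {xs :: bool list. length xs = m - k}"
  define f where "f = (\<lambda>(l, r). l @ b # r)"
  have inj: "inj_on f (A \<times> B)" unfolding f_def A_def by (auto simp: inj_on_def)
  have img: "f ` (A \<times> B) = {us. length us = m \<and> us ! (k - 1) = b}"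
  proof
    show "f ` (A \<times> B) \<subseteq> {us. length us = m \<and> us ! (k - 1) = b}"
      using assms unfolding f_def A_def B_def by (auto simp: nth_append)
    show "{us. length us = m \<and> us ! (k - 1) = b} \<subseteq> f ` (A \<times> B)"
    proof
      fix us assume "us \<in> {us. length us = m \<and> us ! (k - 1) = b}"
      then have us: "length us = m" "us ! (k - 1) = b" by auto
      have "us = take (k-1) us @ us ! (k-1) # drop (Suc (k-1)) us"
        by (rule id_take_nth_drop) (use us assms in simp)
      then have "us = take (k-1) us @ b # drop k us" using us assms by simp
      moreover have "(take (k-1) us, drop k us) \<in> A \<times> B" using us assms unfolding A_def B_def by auto
      ultimately show "us \<in> f ` (A \<times> B)" unfolding f_def by (metis (no_types, lifting) case_prod_conv image_eqI)
    qed
  qed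
  have fA: "finite A" "A \<noteq> {}" "finite B" "B \<noteq> {}"
    unfolding A_def B_def using finite_lists lists_ne by auto
  have "pmf_of_set {us. length us = m \<and> us ! (k - 1) = b} = map_pmf f (pmf_of_set (A \<times> B))"
    using map_pmf_of_set_inj[OF inj] fA img by simp
  also have "\<dots> = map_pmf f (pair_pmf (unif (k-1)) (unif (m-k)))"
    using pmf_of_set_times[OF fA] unfolding unif_def A_def B_def by simp
  also have "\<dots> = bind_pmf (unif (k - 1)) (\<lambda>l. map_pmf (\<lambda>r. l @ b # r) (unif (m - k)))"
    unfolding f_def by (simp add: pair_pmf_def map_bind_pmf map_pmf_def bind_assoc_pmf bind_return_pmf)
  finally show ?thesis .
qed

fun pre :: "LR list \<Rightarrow> bool list \<Rightarrow> bool \<Rightarrow> bool list" where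
  "pre (s # t # \<sigma>) (a # c # l) y = (let r = pre (t # \<sigma>) (c # l) y in (a \<noteq> (if t = L then hd r else c)) # r)"
| "pre \<sigma> [a] y = [a \<noteq> y]"
| "pre \<sigma> l y = l"

lemma length_pre [simp]: "length (pre \<sigma> l y) = length l"
  by (induction \<sigma> l y rule: pre.induct) (auto simp: Let_def)

lemma pre_Cons_ne [simp]: "pre \<sigma> (c # l) y \<noteq> []"
  by (metis length_pre list.distinct(1) length_0_conv)

lemma last_pre: "l \<noteq> [] \<Longrightarrow> length \<sigma> = length l \<Longrightarrow> last (pre \<sigma> l y) = (last l \<noteq> y)"
proof (induction \<sigma> l y rule: pre.induct)
  case (1 s t \<sigma> a c l y)
  have "pre (t # \<sigma>) (c # l) y \<noteq> []" by (metis length_pre list.distinct(1) list.size(3) Suc_neq_Zero length_Cons)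
  then show ?case using 1 by (auto simp: Let_def)
qed auto

definition hx :: "LR list \<Rightarrow> bool list \<Rightarrow> bool" where
  "hx \<tau> r = (if r = [] then False else if hd \<tau> = L then hd (cx \<tau> r) else hd r)"

lemma cx_Cons_hx: "length \<tau> = length r \<Longrightarrow> cx (s # \<tau>) (a # r) = (a \<noteq> hx \<tau> r) # cx \<tau> r"
  by (cases \<tau>; cases r) (auto simp: hx_def Let_def)

lemma cx_ne: "u \<noteq> [] \<Longrightarrow> cx \<sigma> u \<noteq> []"
  by (metis length_cx length_0_conv)

lemma cx_append:
  "length \<sigma> = length l + length v \<Longrightarrow> v \<noteq> [] \<Longrightarrow>
   cx \<sigma> (l @ v) = pre (take (length l) \<sigma>) l (if \<sigma> ! length l = L then hd (cx (drop (length l) \<sigma>) v) else hd v)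
      @ cx (drop (length l) \<sigma>) v"
proof (induction l arbitrary: \<sigma>)
  case Nil
  then show ?case by simp
next
  case (Cons a l)
  obtain s \<sigma>' where \<sigma>: "\<sigma> = s # \<sigma>'" using Cons.prems by (cases \<sigma>) auto
  show ?case
  proof (cases l)
    case Nil
    obtain c v' where v: "v = c # v'" using Cons.prems by (cases v) auto
    obtain t \<sigma>'' where \<sigma>': "\<sigma>' = t # \<sigma>''" using Cons.prems \<sigma> v Nil by (cases \<sigma>') auto
    show ?thesis using \<sigma> \<sigma>' v Nil by (simp add: Let_def)
  next
    case (Cons c l')
    obtain t \<sigma>'' where \<sigma>': "\<sigma>' = t # \<sigma>''" using Cons.prems \<sigma> Cons by (cases \<sigma>') auto
    have IH: "cx \<sigma>' (l @ v) = pre (take (length l) \<sigma>') l (if \<sigma>' ! length l = L then hd (cx (drop (length l) \<sigma>') v) else hd v)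
      @ cx (drop (length l) \<sigma>') v"
      using Cons.IH[of \<sigma>'] Cons.prems \<sigma> by simp
    have ne: "pre (take (length l) \<sigma>') l y \<noteq> []" for y using Cons by (metis length_pre list.distinct(1) length_0_conv)
    have tk: "take (length l) \<sigma>' = t # take (length l') \<sigma>''" using \<sigma>' Cons by simp
    show ?thesis
      using IH ne[of "(if \<sigma>' ! length l = L then hd (cx (drop (length l) \<sigma>') v) else hd v)"]
      unfolding \<sigma> \<sigma>' Cons by (simp add: Let_def tk[unfolded \<sigma>' Cons] hd_append2)
  qed
qed

lemma cx_split:
  assumes "length \<sigma> = length l + 1 + length r"
  shows "cx \<sigma> (l @ b # r) = pre (take (length l) \<sigma>) l
           (if \<sigma> ! length l = L then (b \<noteq> hx (drop (Suc (length l)) \<sigma>) r) else b)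
         @ (b \<noteq> hx (drop (Suc (length l)) \<sigma>) r) # cx (drop (Suc (length l)) \<sigma>) r"
proof -
  obtain s \<tau> where d: "drop (length l) \<sigma> = s # \<tau>" using assms by (cases "drop (length l) \<sigma>") auto
  have "drop (Suc (length l)) \<sigma> = tl (drop (length l) \<sigma>)" by (simp add: drop_Suc tl_drop)
  then have \<tau>: "\<tau> = drop (Suc (length l)) \<sigma>" using d by simp
  have "length (drop (length l) \<sigma>) = length r + 1" using assms by simp
  then have lt: "length \<tau> = length r" using d by simp
  have c: "cx (drop (length l) \<sigma>) (b # r) = (b \<noteq> hx \<tau> r) # cx \<tau> r"
    unfolding d by (rule cx_Cons_hx[OF lt])
  show ?thesis
    using cx_append[of \<sigma> l "b # r"] assms unfolding c \<tau> by simp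
qed

lemma synth_repr:
  assumes "valid_order \<sigma> p" "length \<sigma> = m" "\<sigma> ! (m - 1) = R" "1 \<le> k" "k \<le> m"
  shows "synth (\<lambda>_. W) m p k b = bind_pmf (unif (k - 1)) (\<lambda>l. bind_pmf (unif (m - k))
            (\<lambda>r. map_pmf (\<lambda>zs. (zs, l)) (co W (cx \<sigma> (l @ b # r)))))"
proof -
  have "synth (\<lambda>_. W) m p k b = bind_pmf (unif (k - 1)) (\<lambda>l. bind_pmf (unif (m - k))
            (\<lambda>r. map_pmf (\<lambda>zs. (zs, take (k - 1) (l @ b # r))) (chan_out (\<lambda>_. W) 1 (circuit p m (l @ b # r)))))"
    unfolding synth_def fixed_entry[OF assms(4,5)] by (simp add: bind_assoc_pmf bind_map_pmf)
  also have "\<dots> = bind_pmf (unif (k - 1)) (\<lambda>l. bind_pmf (unif (m - k))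
            (\<lambda>r. map_pmf (\<lambda>zs. (zs, l)) (co W (cx \<sigma> (l @ b # r)))))"
  proof (intro bind_pmf_cong refl)
    fix l r assume l: "l \<in> set_pmf (unif (k - 1))" and r: "r \<in> set_pmf (unif (m - k))"
    have len: "length l = k - 1" "length r = m - k" using l r by (auto simp: set_unif)
    have "circuit p m (l @ b # r) = cx \<sigma> (l @ b # r)"
      by (rule circuit_cx) (use assms len in auto)
    moreover have "take (k - 1) (l @ b # r) = l" using len by simp
    ultimately show "map_pmf (\<lambda>zs. (zs, take (k - 1) (l @ b # r))) (chan_out (\<lambda>_. W) 1 (circuit p m (l @ b # r))) =
         map_pmf (\<lambda>zs. (zs, l)) (co W (cx \<sigma> (l @ b # r)))" unfolding co_def by simp
  qed
  finally show ?thesis .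
qed

lemma pmf_bind_coin: "pmf (bind_pmf coin f) x = (pmf (f False) x + pmf (f True) x) / 2"
proof -
  have "pmf (bind_pmf coin f) x = (\<Sum>a\<in>UNIV. pmf (f a) x) / real (card (UNIV::bool set))"
    by (rule pmf_bind_pmf_of_set) simp_all
  also have "(\<Sum>a\<in>UNIV. pmf (f a) x) = pmf (f False) x + pmf (f True) x"
    by (simp add: UNIV_bool)
  also have "card (UNIV :: bool set) = 2" by (simp add: UNIV_bool)
  finally show ?thesis by simp
qed

definition Xc :: "'z channel \<Rightarrow> LR list \<Rightarrow> bool \<Rightarrow> 'z list pmf" where
  "Xc W \<tau> b = bind_pmf (unif (length \<tau>)) (\<lambda>r. co W ((b \<noteq> hx \<tau> r) # cx \<tau> r))"

lemma pmf_ne_ex: assumes "P \<noteq> Q" shows "\<exists>x. pmf P x \<noteq> pmf Q x"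
proof (rule ccontr)
  assume "\<not> ?thesis"
  then have "\<And>x. pmf P x = pmf Q x" by simp
  then have "P = Q" by (rule pmf_eqI)
  then show False using assms by simp
qed

lemma hx_R: "hx (R # \<tau>) (c # r) = c" by (simp add: hx_def)

lemma hx_L: "length \<tau> = length r \<Longrightarrow> hx (L # \<tau>) (c # r) = (c \<noteq> hx \<tau> r)"
  by (simp add: hx_def cx_Cons_hx)

lemma bind_unif_Suc:
  "bind_pmf (unif (Suc n)) f = bind_pmf coin (\<lambda>c. bind_pmf (unif n) (\<lambda>r. f (c # r)))"
  by (simp add: unif_Suc bind_assoc_pmf bind_map_pmf)

lemma Xc_diff:
  assumes "W True \<noteq> W False"
  shows "\<exists>zs. pmf (Xc W \<tau> True) zs \<noteq> pmf (Xc W \<tau> False) zs"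
proof -
  obtain z0 where z0: "pmf (W True) z0 \<noteq> pmf (W False) z0" using pmf_ne_ex[OF assms] by blast
  show ?thesis
  proof (induction \<tau>)
    case Nil
    have "Xc W [] b = co W [b]" for b
      by (simp add: Xc_def unif_0 bind_return_pmf hx_def)
    then have "pmf (Xc W [] b) [z0] = pmf (W b) z0" for b by (simp add: pmf_co_Cons)
    then have "pmf (Xc W [] True) [z0] \<noteq> pmf (Xc W [] False) [z0]" using z0 by simp
    then show ?case by blast
  next
    case (Cons t \<tau>')
    have cxc: "cx (t # \<tau>') (c # r') = (c \<noteq> hx \<tau>' r') # cx \<tau>' r'" if "r' \<in> set_pmf (unif (length \<tau>'))" for c r'
      using that by (intro cx_Cons_hx) (simp add: set_unif)
    show ?case
    proof (cases t)
      case R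
      obtain zs0 where zs0: "pmf (Xc W \<tau>' True) zs0 \<noteq> pmf (Xc W \<tau>' False) zs0" using Cons.IH by blast
      have X: "Xc W (t # \<tau>') b = bind_pmf coin (\<lambda>c. bind_pmf (W (b \<noteq> c)) (\<lambda>z. map_pmf (Cons z) (Xc W \<tau>' c)))" for b
      proof -
        have "Xc W (t # \<tau>') b = bind_pmf coin (\<lambda>c. bind_pmf (unif (length \<tau>')) (\<lambda>r'. co W ((b \<noteq> hx (t # \<tau>') (c # r')) # cx (t # \<tau>') (c # r'))))"
          unfolding Xc_def by (simp add: bind_unif_Suc)
        also have "\<dots> = bind_pmf coin (\<lambda>c. bind_pmf (unif (length \<tau>')) (\<lambda>r'. co W ((b \<noteq> c) # (c \<noteq> hx \<tau>' r') # cx \<tau>' r')))"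
          using R by (intro bind_pmf_cong refl) (simp add: hx_R cxc[unfolded R])
        also have "\<dots> = bind_pmf coin (\<lambda>c. bind_pmf (W (b \<noteq> c)) (\<lambda>z. map_pmf (Cons z) (Xc W \<tau>' c)))"
          unfolding Xc_def co_Cons[of W "b \<noteq> c" for c]
          by (subst bind_commute_pmf) (simp add: map_bind_pmf)
        finally show ?thesis .
      qed
      have p: "pmf (Xc W (t # \<tau>') b) (z0 # zs0) =
          (pmf (W b) z0 * pmf (Xc W \<tau>' False) zs0 + pmf (W (\<not> b)) z0 * pmf (Xc W \<tau>' True) zs0) / 2" for b
        unfolding X pmf_bind_coin pmf_Cons_pair by simp
      define a where "a = pmf (W True) z0"
      define b' where "b' = pmf (W False) z0"
      define x where "x = pmf (Xc W \<tau>' False) zs0"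
      define y where "y = pmf (Xc W \<tau>' True) zs0"
      have pT: "pmf (Xc W (t # \<tau>') True) (z0 # zs0) = (a * x + b' * y) / 2" using p[of True] unfolding a_def b'_def x_def y_def by simp
      have pF: "pmf (Xc W (t # \<tau>') False) (z0 # zs0) = (b' * x + a * y) / 2" using p[of False] unfolding a_def b'_def x_def y_def by simp
      have D: "(a * x + b' * y) - (b' * x + a * y) = (a - b') * (x - y)" by (simp add: algebra_simps)
      have nz: "(a - b') * (x - y) \<noteq> 0" using z0 zs0 unfolding a_def b'_def x_def y_def by simp
      have "(a * x + b' * y) / 2 \<noteq> (b' * x + a * y) / 2"
      proof
        assume "(a * x + b' * y) / 2 = (b' * x + a * y) / 2"
        then have "(a * x + b' * y) = (b' * x + a * y)" by simp
        then show False using D nz by simp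
      qed
      then show ?thesis using pT pF by (intro exI[of _ "z0 # zs0"]) simp
    next
      case L
      define T where "T = bind_pmf (unif (length \<tau>')) (\<lambda>r'. co W (cx \<tau>' r'))"
      obtain zs0 where zs0: "zs0 \<in> set_pmf T" using set_pmf_not_empty[of T] by blast
      have X: "Xc W (t # \<tau>') b = bind_pmf coin (\<lambda>c. bind_pmf (W (b \<noteq> c)) (\<lambda>z1. map_pmf (Cons z1)
                  (bind_pmf (W c) (\<lambda>z2. map_pmf (Cons z2) T))))" for b
      proof -
        have "Xc W (t # \<tau>') b = bind_pmf coin (\<lambda>c. bind_pmf (unif (length \<tau>')) (\<lambda>r'. co W ((b \<noteq> hx (t # \<tau>') (c # r')) # cx (t # \<tau>') (c # r'))))"
          unfolding Xc_def by (simp add: bind_unif_Suc)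
        also have "\<dots> = bind_pmf coin (\<lambda>c. bind_pmf (unif (length \<tau>'))
                (\<lambda>r'. (\<lambda>c' r'. co W ((b \<noteq> c') # c' # cx \<tau>' r')) (c \<noteq> hx \<tau>' r') r'))"
          using L by (intro bind_pmf_cong refl) (simp add: hx_L set_unif cxc[unfolded L])
        also have "\<dots> = bind_pmf (unif (length \<tau>')) (\<lambda>r'. bind_pmf coin (\<lambda>c.
                 (\<lambda>c' r'. co W ((b \<noteq> c') # c' # cx \<tau>' r')) (c \<noteq> hx \<tau>' r') r'))"
          by (rule bind_commute_pmf)
        also have "\<dots> = bind_pmf (unif (length \<tau>')) (\<lambda>r'. bind_pmf coin (\<lambda>c.
                 co W ((b \<noteq> c) # c # cx \<tau>' r')))"
          by (subst coin_reparam) simp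
        also have "\<dots> = bind_pmf coin (\<lambda>c. bind_pmf (unif (length \<tau>')) (\<lambda>r'. co W ((b \<noteq> c) # c # cx \<tau>' r')))"
          by (rule bind_commute_pmf)
        also have "\<dots> = bind_pmf coin (\<lambda>c. bind_pmf (W (b \<noteq> c)) (\<lambda>z1. map_pmf (Cons z1)
                  (bind_pmf (W c) (\<lambda>z2. map_pmf (Cons z2) T))))"
          unfolding T_def co_Cons
          by (subst bind_commute_pmf, simp add: map_bind_pmf, subst bind_commute_pmf, simp add: map_bind_pmf)
        finally show ?thesis .
      qed
      have p: "pmf (Xc W (t # \<tau>') b) (z0 # z0 # zs0) =
          (pmf (W b) z0 * (pmf (W False) z0 * pmf T zs0) + pmf (W (\<not> b)) z0 * (pmf (W True) z0 * pmf T zs0)) / 2" for b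
        unfolding X pmf_bind_coin pmf_Cons_pair by simp
      define a where "a = pmf (W True) z0"
      define b' where "b' = pmf (W False) z0"
      define x where "x = pmf T zs0"
      have pT: "pmf (Xc W (t # \<tau>') True) (z0 # z0 # zs0) = (a * (b' * x) + b' * (a * x)) / 2" using p[of True] unfolding a_def b'_def x_def by simp
      have pF: "pmf (Xc W (t # \<tau>') False) (z0 # z0 # zs0) = (b' * (b' * x) + a * (a * x)) / 2" using p[of False] unfolding a_def b'_def x_def by simp
      have D: "(a * (b' * x) + b' * (a * x)) - (b' * (b' * x) + a * (a * x)) = - ((a - b') * (a - b') * x)" by (simp add: algebra_simps)
      have x0: "x \<noteq> 0" using zs0 unfolding x_def by (simp add: set_pmf_eq')
      have nz: "(a - b') * (a - b') * x \<noteq> 0" using z0 x0 unfolding a_def b'_def by simp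
      have "(a * (b' * x) + b' * (a * x)) / 2 \<noteq> (b' * (b' * x) + a * (a * x)) / 2"
      proof
        assume "(a * (b' * x) + b' * (a * x)) / 2 = (b' * (b' * x) + a * (a * x)) / 2"
        then have "(a * (b' * x) + b' * (a * x)) = (b' * (b' * x) + a * (a * x))" by simp
        then show False using D nz by simp
      qed
      then show ?thesis using pT pF by (intro exI[of _ "z0 # z0 # zs0"]) simp
    qed
  qed
qed

lemma dpi_map: "sym_cap (\<lambda>x. map_pmf f (V x)) \<le> sym_cap V"
  unfolding map_pmf_def by (rule dpi(1))

lemma cross_ex:
  assumes "pmf P w \<noteq> pmf Q w"
  shows "\<exists>w1 w2. pmf P w1 * pmf Q w2 \<noteq> pmf P w2 * pmf Q w1"
proof (rule ccontr)
  assume "\<not> ?thesis"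
  then have e: "pmf P w * pmf Q w2 = pmf P w2 * pmf Q w" for w2 by simp
  have "infsum (\<lambda>w2. pmf P w * pmf Q w2) UNIV = infsum (\<lambda>w2. pmf P w2 * pmf Q w) UNIV"
    using e by simp
  then have "pmf P w = pmf Q w"
    by (simp add: infsum_cmult_right' infsum_cmult_left' infsum_pmf_1)
  then show False using assms by simp
qed

lemma nondeg:
  assumes "sym_cap W \<notin> {0, 1}"
  shows "W True \<noteq> W False" and "\<exists>z. pmf (W True) z > 0 \<and> pmf (W False) z > 0"
proof -
  show "W True \<noteq> W False" using assms sym_cap_useless[of W] by auto
  show "\<exists>z. pmf (W True) z > 0 \<and> pmf (W False) z > 0"
  proof (rule ccontr)
    assume "\<not> ?thesis"
    then have "\<And>z. pmf (W True) z = 0 \<or> pmf (W False) z = 0"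
      by (metis pmf_nonneg order_le_less)
    then have "sym_cap W = 1" by (rule sym_cap_perfect)
    then show False using assms by simp
  qed
qed

definition Mk :: "'z channel \<Rightarrow> bool \<Rightarrow> (bool \<times> 'z) pmf" where
  "Mk W b = bind_pmf coin (\<lambda>v. map_pmf (Pair v) (W (b \<noteq> v)))"

lemma sym_cap_Mk: "sym_cap (Mk W) = sym_cap W"
  unfolding Mk_def by (rule sym_cap_mask)

lemma pmf_Mk: "pmf (Mk W b) (False, z) = pmf (W b) z / 2"
  unfolding Mk_def pmf_bind_coin pmf_map_Pair by simp

lemma pair_as_bind: "pair_pmf A B = bind_pmf A (\<lambda>x. map_pmf (Pair x) B)"
  unfolding pair_pmf_def map_pmf_def ..

lemma R_repr:
  assumes "valid_order \<sigma> p" "length \<sigma> = m" "\<sigma> ! (m - 1) = R" "2 \<le> k" "k \<le> m" "\<sigma> ! (k - 1) = R"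
  shows "map_pmf (\<lambda>(zs, l). ((last l, zs ! (k - 2)), drop (k - 1) zs)) (synth (\<lambda>_. W) m p k b)
       = pair_pmf (Mk W b) (Xc W (drop k \<sigma>) b)"
proof -
  define \<tau> where "\<tau> = drop k \<sigma>"
  define A where "A = (\<lambda>l. pre (take (k - 1) \<sigma>) l b)"
  define B where "B = (\<lambda>r. (b \<noteq> hx \<tau> r) # cx \<tau> r)"
  have lt: "length \<tau> = m - k" unfolding \<tau>_def using assms by simp
  have S: "synth (\<lambda>_. W) m p k b = bind_pmf (unif (k - 1)) (\<lambda>l. bind_pmf (unif (m - k))
            (\<lambda>r. map_pmf (\<lambda>zs. (zs, l)) (co W (A l @ B r))))"
  proof -
    have "synth (\<lambda>_. W) m p k b = bind_pmf (unif (k - 1)) (\<lambda>l. bind_pmf (unif (m - k))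
            (\<lambda>r. map_pmf (\<lambda>zs. (zs, l)) (co W (cx \<sigma> (l @ b # r)))))"
      by (rule synth_repr) (use assms in auto)
    also have "\<dots> = bind_pmf (unif (k - 1)) (\<lambda>l. bind_pmf (unif (m - k))
            (\<lambda>r. map_pmf (\<lambda>zs. (zs, l)) (co W (A l @ B r))))"
    proof (intro bind_pmf_cong refl)
      fix l r assume l: "l \<in> set_pmf (unif (k - 1))" and r: "r \<in> set_pmf (unif (m - k))"
      have len: "length l = k - 1" "length r = m - k" using l r by (auto simp: set_unif)
      have "cx \<sigma> (l @ b # r) = A l @ B r"
        using cx_split[of \<sigma> l r b] len assms unfolding A_def B_def \<tau>_def by simp
      then show "map_pmf (\<lambda>zs. (zs, l)) (co W (cx \<sigma> (l @ b # r))) = map_pmf (\<lambda>zs. (zs, l)) (co W (A l @ B r))"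
        by simp
    qed
    finally show ?thesis .
  qed
  define g where "g = (\<lambda>(zs :: 'a list, l :: bool list). ((last l, zs ! (k - 2)), drop (k - 1) zs))"
  have step1: "map_pmf g (synth (\<lambda>_. W) m p k b) = bind_pmf (unif (k - 1)) (\<lambda>l. bind_pmf (unif (m - k))
      (\<lambda>r. bind_pmf (co W (A l)) (\<lambda>a. map_pmf (\<lambda>c. ((last l, last a), c)) (co W (B r)))))"
    unfolding S map_bind_pmf
  proof (intro bind_pmf_cong refl)
    fix l r assume l: "l \<in> set_pmf (unif (k - 1))"
    have len: "length l = k - 1" using l by (auto simp: set_unif)
    have "map_pmf g (map_pmf (\<lambda>zs. (zs, l)) (co W (A l @ B r))) =
       bind_pmf (co W (A l)) (\<lambda>a. map_pmf (\<lambda>c. g (a @ c, l)) (co W (B r)))"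
      unfolding co_append map_pmf_comp map_bind_pmf by simp
    also have "\<dots> = bind_pmf (co W (A l)) (\<lambda>a. map_pmf (\<lambda>c. ((last l, last a), c)) (co W (B r)))"
    proof (intro bind_pmf_cong refl map_pmf_cong)
      fix a c assume a: "a \<in> set_pmf (co W (A l))"
      have la: "length a = k - 1" using set_co[OF a] len unfolding A_def by simp
      then have "a \<noteq> []" using assms by auto
      have "k - 2 < length a" using la assms by simp
      then have "(a @ c) ! (k - 2) = a ! (k - 2)" by (simp add: nth_append)
      also have "\<dots> = last a" using la \<open>a \<noteq> []\<close> assms by (simp add: last_conv_nth numeral_2_eq_2)
      finally show "g (a @ c, l) = ((last l, last a), c)" unfolding g_def using la by simp
    qed
    finally show "map_pmf g (map_pmf (\<lambda>zs. (zs, l)) (co W (A l @ B r))) =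
       bind_pmf (co W (A l)) (\<lambda>a. map_pmf (\<lambda>c. ((last l, last a), c)) (co W (B r)))" .
  qed
  have step2: "\<dots> = bind_pmf (unif (k - 1)) (\<lambda>l. bind_pmf (co W (A l)) (\<lambda>a. map_pmf (\<lambda>c. ((last l, last a), c)) (Xc W \<tau> b)))"
  proof (intro bind_pmf_cong refl)
    fix l
    have "bind_pmf (unif (m - k)) (\<lambda>r. bind_pmf (co W (A l)) (\<lambda>a. map_pmf (\<lambda>c. ((last l, last a), c)) (co W (B r))))
        = bind_pmf (co W (A l)) (\<lambda>a. bind_pmf (unif (m - k)) (\<lambda>r. map_pmf (\<lambda>c. ((last l, last a), c)) (co W (B r))))"
      by (rule bind_commute_pmf)
    also have "\<dots> = bind_pmf (co W (A l)) (\<lambda>a. map_pmf (\<lambda>c. ((last l, last a), c)) (Xc W \<tau> b))"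
      unfolding Xc_def B_def lt map_bind_pmf ..
    finally show "bind_pmf (unif (m - k)) (\<lambda>r. bind_pmf (co W (A l)) (\<lambda>a. map_pmf (\<lambda>c. ((last l, last a), c)) (co W (B r))))
        = bind_pmf (co W (A l)) (\<lambda>a. map_pmf (\<lambda>c. ((last l, last a), c)) (Xc W \<tau> b))" .
  qed
  have step3: "\<dots> = bind_pmf (bind_pmf (unif (k - 1)) (\<lambda>l. map_pmf (\<lambda>a. (last l, last a)) (co W (A l))))
       (\<lambda>ob. map_pmf (Pair ob) (Xc W \<tau> b))"
    by (simp add: bind_assoc_pmf bind_map_pmf)
  have step4: "bind_pmf (unif (k - 1)) (\<lambda>l. map_pmf (\<lambda>a. (last l, last a)) (co W (A l))) = Mk W b"
  proof -
    have "bind_pmf (unif (k - 1)) (\<lambda>l. map_pmf (\<lambda>a. (last l, last a)) (co W (A l)))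
        = bind_pmf (unif (k - 1)) (\<lambda>l. map_pmf (Pair (last l)) (W (b \<noteq> last l)))"
    proof (intro bind_pmf_cong refl)
      fix l assume l: "l \<in> set_pmf (unif (k - 1))"
      have len: "length l = k - 1" using l by (auto simp: set_unif)
      then have "l \<noteq> []" using assms by auto
      have "A l \<noteq> []" using \<open>l \<noteq> []\<close> unfolding A_def by (metis length_pre length_0_conv)
      have "last (A l) = (last l \<noteq> b)" unfolding A_def
        by (rule last_pre) (use \<open>l \<noteq> []\<close> len assms in auto)
      have "map_pmf (\<lambda>a. (last l, last a)) (co W (A l)) = map_pmf (Pair (last l)) (map_pmf last (co W (A l)))"
        by (simp add: map_pmf_comp)
      also have "\<dots> = map_pmf (Pair (last l)) (W (b \<noteq> last l))"
      proof -
        have e: "(last l \<noteq> b) = (b \<noteq> last l)" by auto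
        show ?thesis by (simp only: map_last_co[OF \<open>A l \<noteq> []\<close>] \<open>last (A l) = (last l \<noteq> b)\<close> e)
      qed
      finally show "map_pmf (\<lambda>a. (last l, last a)) (co W (A l)) = map_pmf (Pair (last l)) (W (b \<noteq> last l))" .
    qed
    also have "\<dots> = bind_pmf (map_pmf last (unif (k - 1))) (\<lambda>v. map_pmf (Pair v) (W (b \<noteq> v)))"
      by (simp add: bind_map_pmf)
    also have "map_pmf last (unif (k - 1)) = coin"
    proof -
      have "k - 1 = Suc (k - 2)" using assms by simp
      then show ?thesis using map_last_unif[of "k - 2"] by simp
    qed
    finally show ?thesis unfolding Mk_def .
  qed
  show ?thesis
    using step1 step2 step3 step4 unfolding g_def[symmetric] \<tau>_def[symmetric] pair_as_bind by simp
qed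


lemma R_line:
  assumes "valid_order \<sigma> p" "length \<sigma> = m" "\<sigma> ! (m - 1) = R" "2 \<le> k" "k \<le> m" "\<sigma> ! (k - 1) = R"
  shows "sym_cap W \<le> sym_cap (synth (\<lambda>_. W) m p k)"
    and "sym_cap W \<notin> {0, 1} \<Longrightarrow> sym_cap W < sym_cap (synth (\<lambda>_. W) m p k)"
proof -
  define \<tau> where "\<tau> = drop k \<sigma>"
  define PX where "PX = (\<lambda>b. pair_pmf (Mk W b) (Xc W \<tau> b))"
  define g where "g = (\<lambda>(zs :: 'a list, l :: bool list). ((last l, zs ! (k - 2)), drop (k - 1) zs))"
  have eq1: "(\<lambda>b. map_pmf g (synth (\<lambda>_. W) m p k b)) = PX"
    unfolding g_def PX_def \<tau>_def using R_repr[OF assms] by (intro ext) simp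
  have h1: "sym_cap PX \<le> sym_cap (synth (\<lambda>_. W) m p k)"
    using dpi_map[of g "synth (\<lambda>_. W) m p k"] unfolding eq1 .
  have eq2: "(\<lambda>x. bind_pmf (PX x) (\<lambda>y. return_pmf (fst y))) = Mk W"
    unfolding PX_def by (intro ext) (simp add: map_pmf_def[symmetric] map_fst_pair_pmf)
  have h2: "sym_cap (Mk W) \<le> sym_cap PX"
    using dpi(1)[of PX "\<lambda>y. return_pmf (fst y)"] unfolding eq2 .
  show "sym_cap W \<le> sym_cap (synth (\<lambda>_. W) m p k)"
    using h1 h2 sym_cap_Mk[of W] by simp
  assume nd: "sym_cap W \<notin> {0, 1}"
  obtain z where z: "pmf (W True) z > 0" "pmf (W False) z > 0" using nondeg(2)[OF nd] by blast
  obtain zs where zs: "pmf (Xc W \<tau> True) zs \<noteq> pmf (Xc W \<tau> False) zs" using Xc_diff[OF nondeg(1)[OF nd]] by blast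
  obtain w1 w2 where w: "pmf (Xc W \<tau> True) w1 * pmf (Xc W \<tau> False) w2 \<noteq> pmf (Xc W \<tau> True) w2 * pmf (Xc W \<tau> False) w1"
    using cross_ex[OF zs] by blast
  define o' where "o' = (False, z)"
  have mT: "pmf (Mk W True) o' > 0" and mF: "pmf (Mk W False) o' > 0"
    unfolding o'_def pmf_Mk using z by simp_all
  have cr: "pmf (PX True) (o', w1) * pmf (PX False) (o', w2) \<noteq> pmf (PX True) (o', w2) * pmf (PX False) (o', w1)"
  proof -
    have "pmf (PX True) (o', w1) * pmf (PX False) (o', w2) = (pmf (Mk W True) o' * pmf (Mk W False) o') * (pmf (Xc W \<tau> True) w1 * pmf (Xc W \<tau> False) w2)"
      unfolding PX_def pmf_pair by (simp add: algebra_simps)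
    moreover have "pmf (PX True) (o', w2) * pmf (PX False) (o', w1) = (pmf (Mk W True) o' * pmf (Mk W False) o') * (pmf (Xc W \<tau> True) w2 * pmf (Xc W \<tau> False) w1)"
      unfolding PX_def pmf_pair by (simp add: algebra_simps)
    moreover have "pmf (Mk W True) o' * pmf (Mk W False) o' \<noteq> 0" using mT mF by simp
    ultimately show ?thesis using w by simp
  qed
  have "sym_cap (\<lambda>x. bind_pmf (PX x) (\<lambda>y. return_pmf (fst y))) < sym_cap PX"
    by (rule dpi_cross[of "\<lambda>y. return_pmf (fst y)" "(o', w1)" o' "(o', w2)" PX]) (use cr in simp_all)
  then have "sym_cap (Mk W) < sym_cap PX" unfolding eq2 .
  then show "sym_cap W < sym_cap (synth (\<lambda>_. W) m p k)"
    using h1 sym_cap_Mk[of W] by simp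
qed

lemma pmf_bind_ge: "pmf M y * pmf (f y) x \<le> pmf (bind_pmf M f) x"
proof -
  have s: "(\<lambda>y. pmf M y * pmf (f y) x) summable_on UNIV"
    by (rule summable_bounded[where c=1 and p=M]) (auto intro: mult_left_le simp: pmf_le_1)
  have "infsum (\<lambda>y'. pmf M y' * pmf (f y') x) {y} \<le> infsum (\<lambda>y'. pmf M y' * pmf (f y') x) UNIV"
    by (rule infsum_mono_neutral) (use s in auto)
  then show ?thesis by (simp add: pmf_bind_infsum)
qed

lemma pmf_map_pair_l: "pmf (map_pmf (\<lambda>zs. (zs, l)) C) (zs, l) = pmf C zs"
  by (rule pmf_map_inj') (auto simp: inj_def)

definition Pc :: "'z channel \<Rightarrow> LR list \<Rightarrow> nat \<Rightarrow> bool \<Rightarrow> ('z list \<times> bool list) pmf" where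
  "Pc W \<rho> n a = bind_pmf (unif n) (\<lambda>l. map_pmf (\<lambda>zs. (zs, l)) (co W (pre \<rho> l a @ [a])))"

lemma Pc_pos:
  assumes "\<And>x. pmf (W x) z > 0"
  shows "pmf (Pc W \<rho> n a) (replicate (Suc n) z, replicate n False) > 0"
proof -
  define l where "l = replicate n False"
  have "0 < pmf (unif n) l * pmf (map_pmf (\<lambda>zs. (zs, l)) (co W (pre \<rho> l a @ [a]))) (replicate (Suc n) z, l)"
  proof -
    have "pmf (unif n) l > 0" unfolding l_def by (simp add: pmf_unif)
    moreover have "pmf (co W (pre \<rho> l a @ [a])) (replicate (length (pre \<rho> l a @ [a])) z) > 0"
      by (rule pmf_co_replicate[OF assms])
    moreover have "length (pre \<rho> l a @ [a]) = Suc n" unfolding l_def by simp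
    ultimately show ?thesis by (simp add: pmf_map_pair_l)
  qed
  also have "\<dots> \<le> pmf (Pc W \<rho> n a) (replicate (Suc n) z, l)"
    unfolding Pc_def by (rule pmf_bind_ge)
  finally show ?thesis unfolding l_def .
qed

lemma sym_cap_shift_mix:
  "sym_cap (\<lambda>x. bind_pmf (unif n) (\<lambda>r. map_pmf (Pair r) (W (x \<noteq> e r)))) = sym_cap W"
proof -
  have "sym_cap (\<lambda>x. bind_pmf (pmf_of_set {xs. length xs = n}) (\<lambda>r. map_pmf (Pair r) ((\<lambda>r x. W (x \<noteq> e r)) r x)))
      = (\<Sum>r\<in>{xs. length xs = n}. sym_cap ((\<lambda>r x. W (x \<noteq> e r)) r)) / card {xs :: bool list. length xs = n}"
    by (rule sym_cap_mix) (use finite_lists lists_ne in auto)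
  also have "\<dots> = (\<Sum>r\<in>{xs :: bool list. length xs = n}. sym_cap W) / card {xs :: bool list. length xs = n}"
  proof -
    have "sym_cap (\<lambda>x. W (x \<noteq> e r)) = sym_cap W" for r
    proof (cases "e r")
      case True
      then have "(\<lambda>x. W (x \<noteq> e r)) = (\<lambda>x. W (\<not> x))" by auto
      then show ?thesis using sym_cap_flip[of W] by simp
    qed simp
    then show ?thesis by simp
  qed
  also have "\<dots> = sym_cap W" using finite_lists[of n] lists_ne[of n] by (simp add: card_gt_0_iff)
  finally show ?thesis unfolding unif_def by simp
qed


definition epsL :: "LR list \<Rightarrow> nat \<Rightarrow> bool list \<Rightarrow> bool" where
  "epsL \<sigma> k r' = (if \<sigma> ! k = L then False else hx (drop (Suc k) \<sigma>) r')"

definition Qc :: "'z channel \<Rightarrow> LR list \<Rightarrow> nat \<Rightarrow> bool \<Rightarrow> 'z list pmf" where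
  "Qc W \<sigma> k n = bind_pmf (unif (length \<sigma> - k - 1)) (\<lambda>r'. co W ((n \<noteq> epsL \<sigma> k r') # cx (drop (Suc k) \<sigma>) r'))"

definition Ac :: "'z channel \<Rightarrow> LR list \<Rightarrow> nat \<Rightarrow> bool \<Rightarrow> (bool \<times> 'z list) pmf" where
  "Ac W \<sigma> k b = bind_pmf coin (\<lambda>v. map_pmf (Pair v) (Qc W \<sigma> k (b \<noteq> v)))"

definition PQc :: "'z channel \<Rightarrow> LR list \<Rightarrow> nat \<Rightarrow> bool \<Rightarrow> ('z list \<times> bool list \<times> 'z list) pmf" where
  "PQc W \<sigma> k b = bind_pmf (Ac W \<sigma> k b) (\<lambda>(v, q). map_pmf (\<lambda>(zs, l). (zs, l, q)) (Pc W (take (k - 1) \<sigma>) (k - 1) v))"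

lemma L_cx:
  assumes "length \<sigma> = m" "1 \<le> k" "k < m" "\<sigma> ! (k - 1) = L" "length l = k - 1" "length r' = m - k - 1"
  shows "cx \<sigma> (l @ b # c # r') =
     (\<lambda>n. pre (take (k - 1) \<sigma>) l (b \<noteq> n) @ (b \<noteq> n) # (n \<noteq> epsL \<sigma> k r') # cx (drop (Suc k) \<sigma>) r')
     (c \<noteq> (if \<sigma> ! k = L then hx (drop (Suc k) \<sigma>) r' else False))"
proof -
  define \<tau> where "\<tau> = drop k \<sigma>"
  define \<tau>'' where "\<tau>'' = drop (Suc k) \<sigma>"
  have t: "\<tau> = \<sigma> ! k # \<tau>''" unfolding \<tau>_def \<tau>''_def using assms by (simp add: Cons_nth_drop_Suc)
  have l2: "length \<tau>'' = length r'" unfolding \<tau>''_def using assms by simp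
  have sp: "cx \<sigma> (l @ b # (c # r')) = pre (take (length l) \<sigma>) l
           (if \<sigma> ! length l = L then (b \<noteq> hx (drop (Suc (length l)) \<sigma>) (c # r')) else b)
         @ (b \<noteq> hx (drop (Suc (length l)) \<sigma>) (c # r')) # cx (drop (Suc (length l)) \<sigma>) (c # r')"
    by (rule cx_split) (use assms in simp)
  have sk: "Suc (length l) = k" using assms by simp
  have N: "hx \<tau> (c # r') = (c \<noteq> (if \<sigma> ! k = L then hx \<tau>'' r' else False))"
    unfolding t by (cases "\<sigma> ! k") (simp_all add: hx_L[OF l2] hx_R)
  have C: "cx \<tau> (c # r') = (c \<noteq> hx \<tau>'' r') # cx \<tau>'' r'"
    unfolding t by (rule cx_Cons_hx[OF l2])
  have E: "(c \<noteq> hx \<tau>'' r') = ((c \<noteq> (if \<sigma> ! k = L then hx \<tau>'' r' else False)) \<noteq> epsL \<sigma> k r')"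
    unfolding epsL_def \<tau>''_def by (cases "\<sigma> ! k") auto
  show ?thesis
    using sp unfolding sk \<tau>_def[symmetric] N C E using assms \<tau>''_def by simp
qed


lemma L_repr:
  assumes "valid_order \<sigma> p" "length \<sigma> = m" "\<sigma> ! (m - 1) = R" "1 \<le> k" "k < m" "\<sigma> ! (k - 1) = L"
  shows "synth (\<lambda>_. W) m p k b = map_pmf (\<lambda>(zs, l, q). (zs @ q, l)) (PQc W \<sigma> k b)"
proof -
  define \<rho> where "\<rho> = take (k - 1) \<sigma>"
  define \<tau>'' where "\<tau>'' = drop (Suc k) \<sigma>"
  define U where "U = unif (k - 1)"
  define R' where "R' = unif (m - k - 1)"
  define \<delta> where "\<delta> = (\<lambda>r'. if \<sigma> ! k = L then hx \<tau>'' r' else False)"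
  define E where "E = (\<lambda>l n r'. pre \<rho> l (b \<noteq> n) @ (b \<noteq> n) # (n \<noteq> epsL \<sigma> k r') # cx \<tau>'' r')"
  define B where "B = (\<lambda>n r'. (n \<noteq> epsL \<sigma> k r') # cx \<tau>'' r')"
  define Q where "Q = Qc W \<sigma> k"
  have QB: "Q n = bind_pmf R' (\<lambda>r'. co W (B n r'))" for n
    unfolding Q_def Qc_def R'_def B_def \<tau>''_def using assms by simp
  obtain n0 where n0: "m - k = Suc n0" "m - k - 1 = n0" using assms by (metis Suc_diff_Suc diff_Suc_1 minus_nat.diff_0 zero_less_diff)
  have sA: "synth (\<lambda>_. W) m p k b = bind_pmf U (\<lambda>l. bind_pmf coin (\<lambda>c. bind_pmf R'
      (\<lambda>r'. map_pmf (\<lambda>zs. (zs, l)) (co W (E l (c \<noteq> \<delta> r') r')))))"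
  proof -
    have "synth (\<lambda>_. W) m p k b = bind_pmf U (\<lambda>l. bind_pmf (unif (m - k))
            (\<lambda>r. map_pmf (\<lambda>zs. (zs, l)) (co W (cx \<sigma> (l @ b # r)))))"
      unfolding U_def by (rule synth_repr) (use assms in auto)
    also have "\<dots> = bind_pmf U (\<lambda>l. bind_pmf coin (\<lambda>c. bind_pmf R'
            (\<lambda>r'. map_pmf (\<lambda>zs. (zs, l)) (co W (cx \<sigma> (l @ b # c # r'))))))"
      by (simp add: R'_def n0 bind_unif_Suc)
    also have "\<dots> = bind_pmf U (\<lambda>l. bind_pmf coin (\<lambda>c. bind_pmf R'
      (\<lambda>r'. map_pmf (\<lambda>zs. (zs, l)) (co W (E l (c \<noteq> \<delta> r') r')))))"
    proof (intro bind_pmf_cong refl)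
      fix l c r' assume l: "l \<in> set_pmf U" and r: "r' \<in> set_pmf R'"
      have "cx \<sigma> (l @ b # c # r') = E l (c \<noteq> \<delta> r') r'"
        unfolding E_def \<delta>_def \<rho>_def \<tau>''_def
        by (rule L_cx) (use assms l r in \<open>auto simp: U_def R'_def set_unif\<close>)
      then show "map_pmf (\<lambda>zs. (zs, l)) (co W (cx \<sigma> (l @ b # c # r'))) = map_pmf (\<lambda>zs. (zs, l)) (co W (E l (c \<noteq> \<delta> r') r'))"
        by simp
    qed
    finally show ?thesis .
  qed
  have sB: "\<dots> = bind_pmf U (\<lambda>l. bind_pmf coin (\<lambda>v. bind_pmf R'
      (\<lambda>r'. map_pmf (\<lambda>zs. (zs, l)) (co W (E l (v \<noteq> b) r')))))"
  proof (rule bind_pmf_cong[OF refl])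
    fix l
    have "bind_pmf coin (\<lambda>c. bind_pmf R' (\<lambda>r'. map_pmf (\<lambda>zs. (zs, l)) (co W (E l (c \<noteq> \<delta> r') r'))))
       = bind_pmf R' (\<lambda>r'. bind_pmf coin (\<lambda>c. map_pmf (\<lambda>zs. (zs, l)) (co W (E l (c \<noteq> \<delta> r') r'))))"
      by (rule bind_commute_pmf)
    also have "\<dots> = bind_pmf R' (\<lambda>r'. bind_pmf coin (\<lambda>n. map_pmf (\<lambda>zs. (zs, l)) (co W (E l n r'))))"
    proof (rule bind_pmf_cong[OF refl])
      fix r'
      show "bind_pmf coin (\<lambda>c. map_pmf (\<lambda>zs. (zs, l)) (co W (E l (c \<noteq> \<delta> r') r'))) =
            bind_pmf coin (\<lambda>n. map_pmf (\<lambda>zs. (zs, l)) (co W (E l n r')))"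
        using coin_reparam[of "\<lambda>n. map_pmf (\<lambda>zs. (zs, l)) (co W (E l n r'))" "\<delta> r'"] by simp
    qed
    also have "\<dots> = bind_pmf coin (\<lambda>n. bind_pmf R' (\<lambda>r'. map_pmf (\<lambda>zs. (zs, l)) (co W (E l n r'))))"
      by (rule bind_commute_pmf)
    also have "\<dots> = bind_pmf coin (\<lambda>v. bind_pmf R' (\<lambda>r'. map_pmf (\<lambda>zs. (zs, l)) (co W (E l (v \<noteq> b) r'))))"
      using coin_reparam[of "\<lambda>n. bind_pmf R' (\<lambda>r'. map_pmf (\<lambda>zs. (zs, l)) (co W (E l n r')))" b] by simp
    finally show "bind_pmf coin (\<lambda>c. bind_pmf R' (\<lambda>r'. map_pmf (\<lambda>zs. (zs, l)) (co W (E l (c \<noteq> \<delta> r') r'))))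
       = bind_pmf coin (\<lambda>v. bind_pmf R' (\<lambda>r'. map_pmf (\<lambda>zs. (zs, l)) (co W (E l (v \<noteq> b) r'))))" .
  qed
  have sC: "\<dots> = bind_pmf U (\<lambda>l. bind_pmf coin (\<lambda>v. bind_pmf (co W (pre \<rho> l v @ [v]))
      (\<lambda>a. map_pmf (\<lambda>q. (a @ q, l)) (Q (b \<noteq> v)))))"
  proof (rule bind_pmf_cong[OF refl], rule bind_pmf_cong[OF refl])
    fix l v
    have e: "E l (v \<noteq> b) r' = (pre \<rho> l v @ [v]) @ B (b \<noteq> v) r'" for r'
      unfolding E_def B_def by (cases b; cases v) simp_all
    have "bind_pmf R' (\<lambda>r'. map_pmf (\<lambda>zs. (zs, l)) (co W (E l (v \<noteq> b) r')))
        = bind_pmf R' (\<lambda>r'. bind_pmf (co W (pre \<rho> l v @ [v])) (\<lambda>a. map_pmf (\<lambda>q. (a @ q, l)) (co W (B (b \<noteq> v) r'))))"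
      unfolding e co_append by (simp add: map_bind_pmf map_pmf_comp)
    also have "\<dots> = bind_pmf (co W (pre \<rho> l v @ [v])) (\<lambda>a. bind_pmf R' (\<lambda>r'. map_pmf (\<lambda>q. (a @ q, l)) (co W (B (b \<noteq> v) r'))))"
      by (rule bind_commute_pmf)
    also have "\<dots> = bind_pmf (co W (pre \<rho> l v @ [v])) (\<lambda>a. map_pmf (\<lambda>q. (a @ q, l)) (Q (b \<noteq> v)))"
      unfolding QB map_bind_pmf ..
    finally show "bind_pmf R' (\<lambda>r'. map_pmf (\<lambda>zs. (zs, l)) (co W (E l (v \<noteq> b) r')))
        = bind_pmf (co W (pre \<rho> l v @ [v])) (\<lambda>a. map_pmf (\<lambda>q. (a @ q, l)) (Q (b \<noteq> v)))" .
  qed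
  have sD: "\<dots> = bind_pmf coin (\<lambda>v. bind_pmf U (\<lambda>l. bind_pmf (co W (pre \<rho> l v @ [v]))
      (\<lambda>a. map_pmf (\<lambda>q. (a @ q, l)) (Q (b \<noteq> v)))))"
    by (rule bind_commute_pmf)
  have lhs: "map_pmf (\<lambda>(zs, l, q). (zs @ q, l)) (PQc W \<sigma> k b) = bind_pmf coin (\<lambda>v. bind_pmf U (\<lambda>l. bind_pmf (co W (pre \<rho> l v @ [v]))
      (\<lambda>a. map_pmf (\<lambda>q. (a @ q, l)) (Q (b \<noteq> v)))))"
  proof -
    have "map_pmf (\<lambda>(zs, l, q). (zs @ q, l)) (PQc W \<sigma> k b) =
        bind_pmf coin (\<lambda>v. bind_pmf (Q (b \<noteq> v)) (\<lambda>q. bind_pmf U (\<lambda>l. map_pmf (\<lambda>a. (a @ q, l)) (co W (pre \<rho> l v @ [v])))))"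
      unfolding PQc_def Ac_def Pc_def Q_def[symmetric] U_def[symmetric] \<rho>_def[symmetric]
      by (simp add: map_bind_pmf bind_assoc_pmf bind_map_pmf map_pmf_comp bind_return_pmf)
    also have "\<dots> = bind_pmf coin (\<lambda>v. bind_pmf U (\<lambda>l. bind_pmf (co W (pre \<rho> l v @ [v]))
      (\<lambda>a. map_pmf (\<lambda>q. (a @ q, l)) (Q (b \<noteq> v)))))"
    proof (rule bind_pmf_cong[OF refl])
      fix v
      have "bind_pmf (Q (b \<noteq> v)) (\<lambda>q. bind_pmf U (\<lambda>l. map_pmf (\<lambda>a. (a @ q, l)) (co W (pre \<rho> l v @ [v]))))
         = bind_pmf U (\<lambda>l. bind_pmf (Q (b \<noteq> v)) (\<lambda>q. map_pmf (\<lambda>a. (a @ q, l)) (co W (pre \<rho> l v @ [v]))))"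
        by (rule bind_commute_pmf)
      also have "\<dots> = bind_pmf U (\<lambda>l. bind_pmf (co W (pre \<rho> l v @ [v])) (\<lambda>a. map_pmf (\<lambda>q. (a @ q, l)) (Q (b \<noteq> v))))"
      proof (rule bind_pmf_cong[OF refl])
        fix l
        show "bind_pmf (Q (b \<noteq> v)) (\<lambda>q. map_pmf (\<lambda>a. (a @ q, l)) (co W (pre \<rho> l v @ [v])))
          = bind_pmf (co W (pre \<rho> l v @ [v])) (\<lambda>a. map_pmf (\<lambda>q. (a @ q, l)) (Q (b \<noteq> v)))"
          unfolding map_pmf_def by (rule bind_commute_pmf)
      qed
      finally show "bind_pmf (Q (b \<noteq> v)) (\<lambda>q. bind_pmf U (\<lambda>l. map_pmf (\<lambda>a. (a @ q, l)) (co W (pre \<rho> l v @ [v]))))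
         = bind_pmf U (\<lambda>l. bind_pmf (co W (pre \<rho> l v @ [v])) (\<lambda>a. map_pmf (\<lambda>q. (a @ q, l)) (Q (b \<noteq> v))))" .
    qed
    finally show ?thesis .
  qed
  show ?thesis using sA sB sC sD lhs by simp
qed


lemma pmf_Ac: "pmf (Ac W \<sigma> k b) (v, q) = pmf (Qc W \<sigma> k (b \<noteq> v)) q / 2"
  unfolding Ac_def pmf_bind_coin pmf_map_Pair by (cases v) simp_all

lemma Qc_diff:
  assumes "W True \<noteq> W False" "k < length \<sigma>"
  shows "\<exists>q. pmf (Qc W \<sigma> k True) q \<noteq> pmf (Qc W \<sigma> k False) q"
proof (cases "\<sigma> ! k")
  case L
  have "map_pmf hd (Qc W \<sigma> k n) = W n" for n
    unfolding Qc_def epsL_def using L by (simp add: map_bind_pmf map_hd_co)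
  then have "Qc W \<sigma> k True \<noteq> Qc W \<sigma> k False" using assms(1) by metis
  then show ?thesis by (rule pmf_ne_ex)
next
  case R
  have "Qc W \<sigma> k n = Xc W (drop (Suc k) \<sigma>) n" for n
    unfolding Qc_def Xc_def epsL_def using R by simp
  then show ?thesis using Xc_diff[OF assms(1), of "drop (Suc k) \<sigma>"] by simp
qed

lemma sym_cap_Qc: "sym_cap (Qc W \<sigma> k) \<le> sym_cap W"
proof -
  define M where "M = (\<lambda>n. bind_pmf (unif (length \<sigma> - k - 1)) (\<lambda>r'. map_pmf (Pair r') (W (n \<noteq> epsL \<sigma> k r'))))"
  define K where "K = (\<lambda>(r', z). map_pmf (Cons z) (co W (cx (drop (Suc k) \<sigma>) r')))"
  have "Qc W \<sigma> k = (\<lambda>n. bind_pmf (M n) K)"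
    unfolding Qc_def M_def K_def by (intro ext) (simp add: co_Cons bind_assoc_pmf bind_map_pmf)
  then have "sym_cap (Qc W \<sigma> k) \<le> sym_cap M" using dpi(1)[of M K] by simp
  also have "sym_cap M = sym_cap W" unfolding M_def by (rule sym_cap_shift_mix)
  finally show ?thesis .
qed

lemma L_line:
  assumes "valid_order \<sigma> p" "length \<sigma> = m" "\<sigma> ! (m - 1) = R" "1 \<le> k" "k < m" "\<sigma> ! (k - 1) = L"
  shows "sym_cap (synth (\<lambda>_. W) m p k) \<le> sym_cap W"
    and "sym_cap W \<notin> {0, 1} \<Longrightarrow> sym_cap (synth (\<lambda>_. W) m p k) < sym_cap W"
proof -
  define P where "P = Pc W (take (k - 1) \<sigma>) (k - 1)"
  define Kp where "Kp = (\<lambda>(v, q :: 'a list). map_pmf (\<lambda>(zs :: 'a list, l :: bool list). (zs, l, q)) (P v))"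
  have PQ: "PQc W \<sigma> k = (\<lambda>b. bind_pmf (Ac W \<sigma> k b) Kp)"
    unfolding PQc_def Kp_def P_def ..
  have eqS: "synth (\<lambda>_. W) m p k = (\<lambda>b. map_pmf (\<lambda>(zs, l, q). (zs @ q, l)) (PQc W \<sigma> k b))"
    by (intro ext) (rule L_repr[OF assms])
  have h1: "sym_cap (synth (\<lambda>_. W) m p k) \<le> sym_cap (PQc W \<sigma> k)"
    unfolding eqS by (rule dpi_map)
  have h2: "sym_cap (PQc W \<sigma> k) \<le> sym_cap (Ac W \<sigma> k)"
    unfolding PQ by (rule dpi(1))
  have h3: "sym_cap (Ac W \<sigma> k) = sym_cap (Qc W \<sigma> k)"
    unfolding Ac_def by (rule sym_cap_mask)
  show "sym_cap (synth (\<lambda>_. W) m p k) \<le> sym_cap W"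
    using h1 h2 h3 sym_cap_Qc[of W \<sigma> k] by simp
  assume nd: "sym_cap W \<notin> {0, 1}"
  obtain z where z: "pmf (W True) z > 0" "pmf (W False) z > 0" using nondeg(2)[OF nd] by blast
  have zall: "\<And>x. pmf (W x) z > 0" using z by (case_tac x) simp_all
  obtain q0 where q0: "pmf (Qc W \<sigma> k True) q0 \<noteq> pmf (Qc W \<sigma> k False) q0"
    using Qc_diff[OF nondeg(1)[OF nd]] assms by auto
  define zz where "zz = (replicate (Suc (k - 1)) z, replicate (k - 1) False, q0)"
  have kp: "pmf (Kp (v, q0)) zz > 0" for v
  proof -
    have "pmf (Kp (v, q0)) zz = pmf (P v) (replicate (Suc (k - 1)) z, replicate (k - 1) False)"
    proof -
      have "pmf (map_pmf (\<lambda>(zs :: 'a list, l :: bool list). (zs, l, q0)) (P v)) ((\<lambda>(zs, l). (zs, l, q0)) (replicate (Suc (k - 1)) z, replicate (k - 1) False))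
          = pmf (P v) (replicate (Suc (k - 1)) z, replicate (k - 1) False)"
        by (rule pmf_map_inj') (auto simp: inj_def)
      then show ?thesis unfolding Kp_def zz_def by simp
    qed
    then show ?thesis using Pc_pos[OF zall] unfolding P_def by simp
  qed
  have cr: "pmf (Ac W \<sigma> k True) (False, q0) * pmf (Ac W \<sigma> k False) (True, q0) \<noteq>
            pmf (Ac W \<sigma> k True) (True, q0) * pmf (Ac W \<sigma> k False) (False, q0)"
  proof -
    define a where "a = pmf (Qc W \<sigma> k True) q0"
    define c where "c = pmf (Qc W \<sigma> k False) q0"
    have "a \<ge> 0" "c \<ge> 0" "a \<noteq> c" unfolding a_def c_def using q0 by auto
    then have "a * a \<noteq> c * c" by (metis mult_right_mono mult_strict_mono' linorder_neqE_linordered_idom order_less_irrefl mult_le_less_imp_less)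
    then show ?thesis unfolding pmf_Ac a_def c_def by simp
  qed
  have "sym_cap (\<lambda>x. bind_pmf (Ac W \<sigma> k x) Kp) < sym_cap (Ac W \<sigma> k)"
    by (rule dpi_cross[OF kp[of False] kp[of True] cr])
  then have "sym_cap (PQc W \<sigma> k) < sym_cap (Ac W \<sigma> k)" unfolding PQ .
  then show "sym_cap (synth (\<lambda>_. W) m p k) < sym_cap W"
    using h1 h3 sym_cap_Qc[of W \<sigma> k] by simp
qed

lemma count_concat_rep: "length (filter P (concat (replicate n xs))) = n * length (filter P xs)"
  by (induction n) auto

lemma length_pattern: "length (pattern b g) = b + g"
proof -
  have c: "length (concat (replicate n [L, R])) = 2 * n" for n by (induction n) auto
  show ?thesis unfolding pattern_def using c by auto
qed

lemma count_pattern: "length (filter (\<lambda>x. x = L) (pattern b g)) = b"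
    "length (filter (\<lambda>x. x = R) (pattern b g)) = g"
  unfolding pattern_def by (auto simp: count_concat_rep filter_replicate)

lemma hd_cr: "hd (concat (replicate (Suc n) [L, R])) = L" by simp

lemma last_cr: "last (concat (replicate (Suc n) [L, R])) = R"
  by (induction n) auto

lemma pattern_ends:
  assumes "0 < b" "0 < g"
  shows "pattern b g ! 0 = L" "pattern b g ! (b + g - 1) = R"
proof -
  have ne: "pattern b g \<noteq> []" using length_pattern[of b g] assms by auto
  have "hd (pattern b g) = L"
  proof (cases "g \<le> b")
    case True
    obtain n where n: "g = Suc n" using assms by (cases g) auto
    show ?thesis using True n unfolding pattern_def by (cases "b - g") auto
  next
    case False
    obtain n where n: "b = Suc n" using assms by (cases b) auto
    show ?thesis using False n unfolding pattern_def by simp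
  qed
  then show "pattern b g ! 0 = L" using ne by (simp add: hd_conv_nth)
  have "last (pattern b g) = R"
  proof (cases "g \<le> b")
    case True
    obtain n where n: "g = Suc n" using assms by (cases g) auto
    show ?thesis using True n last_cr[of n] unfolding pattern_def by simp
  next
    case False
    obtain n where n: "g - b = Suc n" using False by (cases "g - b") auto
    show ?thesis using False n unfolding pattern_def by simp
  qed
  then show "pattern b g ! (b + g - 1) = R" using ne length_pattern[of b g] by (simp add: last_conv_nth)
qed

lemma nth_line_props:
  assumes "1 \<le> i" "i \<le> length (filter (\<lambda>x. x = t) \<sigma>)"
  shows "1 \<le> nth_line \<sigma> t i" "nth_line \<sigma> t i \<le> length \<sigma>" "\<sigma> ! (nth_line \<sigma> t i - 1) = t"
proof -
  define ys where "ys = [1..<Suc (length \<sigma>)]"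
  define f where "f = (\<lambda>k. \<sigma> ! (k - 1))"
  define xs where "xs = filter (\<lambda>k. \<sigma> ! (k - 1) = t) ys"
  have m: "map f ys = \<sigma>"
  proof -
    have "ys = map Suc [0..<length \<sigma>]" unfolding ys_def by (simp add: map_Suc_upt)
    then have "map f ys = map (\<lambda>k. \<sigma> ! k) [0..<length \<sigma>]" unfolding f_def by simp
    then show ?thesis by (simp add: map_nth)
  qed
  have lx: "length xs = length (filter (\<lambda>x. x = t) \<sigma>)"
  proof -
    have "filter (\<lambda>x. x = t) (map f ys) = map f (filter ((\<lambda>x. x = t) \<circ> f) ys)" by (rule filter_map)
    then have "length (filter (\<lambda>x. x = t) \<sigma>) = length (filter ((\<lambda>x. x = t) \<circ> f) ys)" using m by (metis length_map)
    moreover have "((\<lambda>x. x = t) \<circ> f) = (\<lambda>k. \<sigma> ! (k - 1) = t)" by (simp add: o_def f_def)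
    ultimately show ?thesis unfolding xs_def by simp
  qed
  have "xs ! (i - 1) \<in> set xs" using assms lx by (intro nth_mem) simp
  then have "xs ! (i - 1) \<in> set ys" "\<sigma> ! (xs ! (i - 1) - 1) = t" unfolding xs_def by auto
  moreover have "set ys = {1..<Suc (length \<sigma>)}" unfolding ys_def by (rule set_upt)
  ultimately show "1 \<le> nth_line \<sigma> t i" "nth_line \<sigma> t i \<le> length \<sigma>" "\<sigma> ! (nth_line \<sigma> t i - 1) = t"
    unfolding nth_line_def ys_def[symmetric] xs_def[symmetric] by auto
qed

theorem proposition3:
  fixes W :: "'z channel" and b g :: nat and p :: "nat \<Rightarrow> real"
  assumes "0 < b" and "0 < g"
    and "valid_order (pattern b g) p"
  shows "\<forall>i\<in>{1..b}. \<forall>j\<in>{1..g}.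
           sym_cap (L1 W b g p i) \<le> sym_cap W \<and> sym_cap W \<le> sym_cap (R1 W b g p j) \<and>
           (sym_cap W \<notin> {0, 1} \<longrightarrow>
              sym_cap (L1 W b g p i) < sym_cap W \<and> sym_cap W < sym_cap (R1 W b g p j))"
proof (intro ballI)
  fix i j assume i: "i \<in> {1..b}" and j: "j \<in> {1..g}"
  define \<sigma> where "\<sigma> = pattern b g"
  define m where "m = b + g"
  have len: "length \<sigma> = m" unfolding \<sigma>_def m_def by (rule length_pattern)
  have e0: "\<sigma> ! 0 = L" and em: "\<sigma> ! (m - 1) = R"
    using pattern_ends[OF assms(1,2)] unfolding \<sigma>_def m_def by auto
  have vo: "valid_order \<sigma> p" using assms(3) unfolding \<sigma>_def .
  define kL where "kL = nth_line \<sigma> L i"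
  define kR where "kR = nth_line \<sigma> R j"
  have pL: "1 \<le> kL" "kL \<le> m" "\<sigma> ! (kL - 1) = L"
    using nth_line_props[of i L \<sigma>] i count_pattern(1)[of b g] len unfolding kL_def \<sigma>_def by auto
  have pR: "1 \<le> kR" "kR \<le> m" "\<sigma> ! (kR - 1) = R"
    using nth_line_props[of j R \<sigma>] j count_pattern(2)[of b g] len unfolding kR_def \<sigma>_def by auto
  have kL: "kL < m"
  proof (rule ccontr)
    assume "\<not> kL < m"
    then have "kL = m" using pL by simp
    then show False using pL(3) em by simp
  qed
  have kR: "2 \<le> kR"
  proof (rule ccontr)
    assume "\<not> 2 \<le> kR"
    then have "kR = 1" using pR by simp
    then show False using pR(3) e0 by simp
  qed
  have Ldef: "L1 W b g p i = synth (\<lambda>_. W) m p kL" unfolding L1_def kL_def \<sigma>_def m_def ..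
  have Rdef: "R1 W b g p j = synth (\<lambda>_. W) m p kR" unfolding R1_def kR_def \<sigma>_def m_def ..
  note Ll = L_line[OF vo len em pL(1) kL pL(3), of W]
  note Rl = R_line[OF vo len em kR pR(2) pR(3), of W]
  show "sym_cap (L1 W b g p i) \<le> sym_cap W \<and> sym_cap W \<le> sym_cap (R1 W b g p j) \<and>
           (sym_cap W \<notin> {0, 1} \<longrightarrow>
              sym_cap (L1 W b g p i) < sym_cap W \<and> sym_cap W < sym_cap (R1 W b g p j))"
    unfolding Ldef Rdef using Ll Rl by blast
qed

end
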